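(* Let $\varepsilon<\varepsilon_0=1/21$ and let $B\subset\mathbb{Z}^2$ be an $\varepsilon$-rare random set. Then almost surely $\mathbb{Z}^2\setminus B$ has a unique infinite $\square$-connected component $I$, and every $\boxtimes$-connected component of $\mathbb{Z}^2\setminus I$ is finite.
   Context: $\square$-adjacency on $\mathbb{Z}^2$: $\|u-v\|_1=1$; $\boxtimes$-adjacency: $\|u-v\|_\infty=1$. A random set $B\subset\mathbb{Z}^2$ (defined on a probability space with measure $\mathbb{P}$) is $\varepsilon$-rare ($\varepsilon\ge0$) if $\mathbb{P}(A\subset B)\le\varepsilon^{\#A}$ for every finite $A\subset\mathbb{Z}^2$. *)

theory Defs
  imports "HOL-Probability.Probability"
begin

type_synonym site = "int \<times> int"

definition sq_adj :: "site \<Rightarrow> site \<Rightarrow> bool" where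
  "sq_adj u v \<longleftrightarrow> \<bar>fst u - fst v\<bar> + \<bar>snd u - snd v\<bar> = 1"

definition box_adj :: "site \<Rightarrow> site \<Rightarrow> bool" where
  "box_adj u v \<longleftrightarrow> max \<bar>fst u - fst v\<bar> \<bar>snd u - snd v\<bar> = 1"

definition adj_in :: "(site \<Rightarrow> site \<Rightarrow> bool) \<Rightarrow> site set \<Rightarrow> site \<Rightarrow> site \<Rightarrow> bool" where
  "adj_in adj S u v \<longleftrightarrow> u \<in> S \<and> v \<in> S \<and> adj u v"

text \<open>The adj-connected component of x inside S (x assumed in S).\<close>
definition comp_of :: "(site \<Rightarrow> site \<Rightarrow> bool) \<Rightarrow> site set \<Rightarrow> site \<Rightarrow> site set" where
  "comp_of adj S x = {y. (adj_in adj S)\<^sup>*\<^sup>* x y}"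

definition components_of :: "(site \<Rightarrow> site \<Rightarrow> bool) \<Rightarrow> site set \<Rightarrow> site set set" where
  "components_of adj S = comp_of adj S ` S"

definition rare :: "'a measure \<Rightarrow> ('a \<Rightarrow> site set) \<Rightarrow> real \<Rightarrow> bool" where
  "rare M B \<epsilon> \<longleftrightarrow> 0 \<le> \<epsilon> \<and>
     (\<forall>A. finite A \<longrightarrow> measure M {\<omega> \<in> space M. A \<subseteq> B \<omega>} \<le> \<epsilon> ^ card A)"

end

theory Submission
  imports Defs
begin

definition dinf :: "site \<Rightarrow> site \<Rightarrow> int" where
  "dinf u v = max \<bar>fst u - fst v\<bar> \<bar>snd u - snd v\<bar>"
definition nrm :: "site \<Rightarrow> int" where
  "nrm u = max \<bar>fst u\<bar> \<bar>snd u\<bar>"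

definition fill :: "site set \<Rightarrow> site set" where
  "fill C = C \<union> {y. y \<notin> C \<and> finite (comp_of sq_adj (- C) y)}"

lemma sq_adj_sym: "sq_adj u v \<Longrightarrow> sq_adj v u"
  unfolding sq_adj_def by linarith
lemma box_adj_sym: "box_adj u v \<Longrightarrow> box_adj v u"
  unfolding box_adj_def by linarith
lemma sq_box: "sq_adj u v \<Longrightarrow> box_adj u v"
  unfolding sq_adj_def box_adj_def by auto
lemma box_cases: "box_adj u v \<Longrightarrow> sq_adj u v \<or> (sq_adj u (fst v, snd u) \<and> sq_adj (fst v, snd u) v)"
  unfolding sq_adj_def box_adj_def by auto

lemma comp_mem: "y \<in> comp_of adj S x \<longleftrightarrow> (adj_in adj S)\<^sup>*\<^sup>* x y"
  unfolding comp_of_def by simp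

lemma comp_self: "x \<in> comp_of adj S x"
  unfolding comp_of_def by simp

lemma rt_end: "(adj_in adj S)\<^sup>*\<^sup>* x y \<Longrightarrow> y = x \<or> y \<in> S"
  by (induction rule: rtranclp.induct) (auto simp: adj_in_def)

lemma comp_sub: "x \<in> S \<Longrightarrow> comp_of adj S x \<subseteq> S"
  using rt_end unfolding comp_of_def by blast

lemma rt_sym:
  assumes "\<And>u v. adj u v \<Longrightarrow> adj v u" "(adj_in adj S)\<^sup>*\<^sup>* x y"
  shows "(adj_in adj S)\<^sup>*\<^sup>* y x"
  using assms(2)
proof (induction rule: rtranclp.induct)
  case (rtrancl_refl a) then show ?case by simp
next
  case (rtrancl_into_rtrancl a b c)
  have "adj_in adj S c b" using rtrancl_into_rtrancl(2) assms(1) unfolding adj_in_def by auto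
  then show ?case using rtrancl_into_rtrancl(3) by (meson converse_rtranclp_into_rtranclp)
qed

lemma comp_eq:
  assumes "\<And>u v. adj u v \<Longrightarrow> adj v u" "y \<in> comp_of adj S x"
  shows "comp_of adj S y = comp_of adj S x"
proof -
  have xy: "(adj_in adj S)\<^sup>*\<^sup>* x y" using assms(2) comp_mem by metis
  have yx: "(adj_in adj S)\<^sup>*\<^sup>* y x" using rt_sym[OF assms(1) xy] by blast
  show ?thesis unfolding comp_of_def using xy yx by (auto intro: rtranclp_trans)
qed

lemma sq_comp_eq: "y \<in> comp_of sq_adj S x \<Longrightarrow> comp_of sq_adj S y = comp_of sq_adj S x"
  by (rule comp_eq[OF sq_adj_sym])
lemma box_comp_eq: "y \<in> comp_of box_adj S x \<Longrightarrow> comp_of box_adj S y = comp_of box_adj S x"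
  by (rule comp_eq[OF box_adj_sym])
lemma rt_sym_sq: "(adj_in sq_adj S)\<^sup>*\<^sup>* x y \<Longrightarrow> (adj_in sq_adj S)\<^sup>*\<^sup>* y x"
  by (rule rt_sym[OF sq_adj_sym])
lemma rt_sym_box: "(adj_in box_adj S)\<^sup>*\<^sup>* x y \<Longrightarrow> (adj_in box_adj S)\<^sup>*\<^sup>* y x"
  by (rule rt_sym[OF box_adj_sym])

lemma comp_step:
  assumes "y \<in> comp_of adj S x" "y \<in> S" "z \<in> S" "adj y z"
  shows "z \<in> comp_of adj S x"
  using assms unfolding comp_of_def adj_in_def by (auto intro: rtranclp.rtrancl_into_rtrancl)

lemma comp_mono: "S \<subseteq> T \<Longrightarrow> comp_of adj S x \<subseteq> comp_of adj T x"
proof -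
  assume st: "S \<subseteq> T"
  have "adj_in adj S \<le> adj_in adj T" using st unfolding adj_in_def by auto
  then have "(adj_in adj S)\<^sup>*\<^sup>* \<le> (adj_in adj T)\<^sup>*\<^sup>*" by (rule rtranclp_mono)
  then show ?thesis unfolding comp_of_def by auto
qed

lemma comp_restrict:
  assumes "x \<in> T" "comp_of adj S x \<subseteq> T"
  shows "comp_of adj S x \<subseteq> comp_of adj (S \<inter> T) x"
proof
  fix y assume "y \<in> comp_of adj S x"
  then have "(adj_in adj S)\<^sup>*\<^sup>* x y" by (simp add: comp_mem)
  then show "y \<in> comp_of adj (S \<inter> T) x"
  proof (induction rule: rtranclp_induct)
    case base show ?case by (simp add: comp_self)
  next
    case (step b c)
    have cT: "c \<in> T" using assms(2) step(1,2) by (auto simp: comp_mem intro: rtranclp.rtrancl_into_rtrancl)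
    have bT: "b \<in> T" using assms(2) step(1) by (auto simp: comp_mem)
    have "b \<in> S" "c \<in> S" "adj b c" using step(2) by (auto simp: adj_in_def)
    then show ?case using comp_step[OF step(3)] bT cT by auto
  qed
qed

lemma comp_sub_comp:
  assumes "\<And>u v. adj u v \<Longrightarrow> adj v u" "x \<in> S" "S \<subseteq> T"
  shows "comp_of adj S x \<subseteq> comp_of adj T x"
  using comp_mono assms by blast

lemma row_path:
  assumes "\<And>x. a \<le> x \<Longrightarrow> x \<le> a + int k \<Longrightarrow> (x, y) \<in> S"
  shows "(adj_in sq_adj S)\<^sup>*\<^sup>* (a, y) (a + int k, y)"
  using assms
proof (induction k)
  case 0 then show ?case by simp
next
  case (Suc k)
  have "(adj_in sq_adj S)\<^sup>*\<^sup>* (a, y) (a + int k, y)" using Suc by auto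
  moreover have "adj_in sq_adj S (a + int k, y) (a + int (Suc k), y)"
    using Suc.prems unfolding adj_in_def sq_adj_def by auto
  ultimately show ?case by (rule rtranclp.rtrancl_into_rtrancl)
qed

lemma col_path:
  assumes "\<And>y. a \<le> y \<Longrightarrow> y \<le> a + int k \<Longrightarrow> (x, y) \<in> S"
  shows "(adj_in sq_adj S)\<^sup>*\<^sup>* (x, a) (x, a + int k)"
  using assms
proof (induction k)
  case 0 then show ?case by simp
next
  case (Suc k)
  have "(adj_in sq_adj S)\<^sup>*\<^sup>* (x, a) (x, a + int k)" using Suc by auto
  moreover have "adj_in sq_adj S (x, a + int k) (x, a + int (Suc k))"
    using Suc.prems unfolding adj_in_def sq_adj_def by auto
  ultimately show ?case by (rule rtranclp.rtrancl_into_rtrancl)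
qed

lemma row_path2:
  assumes "\<And>x. min a b \<le> x \<Longrightarrow> x \<le> max a b \<Longrightarrow> (x, y) \<in> S"
  shows "(adj_in sq_adj S)\<^sup>*\<^sup>* (a, y) (b, y)"
proof (cases "a \<le> b")
  case True
  have "(adj_in sq_adj S)\<^sup>*\<^sup>* (a, y) (a + int (nat (b - a)), y)"
    by (rule row_path) (use assms True in auto)
  then show ?thesis using True by simp
next
  case False
  have "(adj_in sq_adj S)\<^sup>*\<^sup>* (b, y) (b + int (nat (a - b)), y)"
    by (rule row_path) (use assms False in auto)
  then have "(adj_in sq_adj S)\<^sup>*\<^sup>* (b, y) (a, y)" using False by simp
  then show ?thesis by (rule rt_sym_sq)
qed

lemma col_path2:
  assumes "\<And>y. min a b \<le> y \<Longrightarrow> y \<le> max a b \<Longrightarrow> (x, y) \<in> S"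
  shows "(adj_in sq_adj S)\<^sup>*\<^sup>* (x, a) (x, b)"
proof (cases "a \<le> b")
  case True
  have "(adj_in sq_adj S)\<^sup>*\<^sup>* (x, a) (x, a + int (nat (b - a)))"
    by (rule col_path) (use assms True in auto)
  then show ?thesis using True by simp
next
  case False
  have "(adj_in sq_adj S)\<^sup>*\<^sup>* (x, b) (x, b + int (nat (a - b)))"
    by (rule col_path) (use assms False in auto)
  then have "(adj_in sq_adj S)\<^sup>*\<^sup>* (x, b) (x, a)" using False by simp
  then show ?thesis by (rule rt_sym_sq)
qed

lemma box_conn:
  assumes "nrm p \<le> N" "nrm q \<le> N"
  shows "(adj_in sq_adj {z. nrm z \<le> N})\<^sup>*\<^sup>* p q"
proof -
  obtain a b where p: "p = (a, b)" by force
  obtain c d where q: "q = (c, d)" by force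
  have 1: "(adj_in sq_adj {z. nrm z \<le> N})\<^sup>*\<^sup>* (a, b) (c, b)"
    by (rule row_path2) (use assms p q in \<open>auto simp: nrm_def\<close>)
  have 2: "(adj_in sq_adj {z. nrm z \<le> N})\<^sup>*\<^sup>* (c, b) (c, d)"
    by (rule col_path2) (use assms p q in \<open>auto simp: nrm_def\<close>)
  show ?thesis using 1 2 p q by (auto intro: rtranclp_trans)
qed

lemma out_conn1:
  assumes "nrm p > m" "m \<ge> 0"
  shows "(adj_in sq_adj {z. nrm z > m})\<^sup>*\<^sup>* p (m+1, m+1)"
proof -
  obtain a b where p: "p = (a, b)" by force
  let ?S = "{z. nrm z > m}"
  have "m < max \<bar>a\<bar> \<bar>b\<bar>" using assms p unfolding nrm_def by simp
  then have "b > m \<or> b < -m \<or> a > m \<or> a < -m" by arith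
  then consider "b > m" | "b < -m" | "a > m" | "a < -m" by blast
  then show ?thesis
  proof cases
    case 1
    have "(adj_in sq_adj ?S)\<^sup>*\<^sup>* (a, b) (m+1, b)" by (rule row_path2) (use 1 in \<open>auto simp: nrm_def\<close>)
    moreover have "(adj_in sq_adj ?S)\<^sup>*\<^sup>* (m+1, b) (m+1, m+1)" by (rule col_path2) (use 1 in \<open>auto simp: nrm_def\<close>)
    ultimately show ?thesis using p by (auto intro: rtranclp_trans)
  next
    case 2
    have "(adj_in sq_adj ?S)\<^sup>*\<^sup>* (a, b) (m+1, b)" by (rule row_path2) (use 2 in \<open>auto simp: nrm_def\<close>)
    moreover have "(adj_in sq_adj ?S)\<^sup>*\<^sup>* (m+1, b) (m+1, m+1)" by (rule col_path2) (use 2 assms in \<open>auto simp: nrm_def\<close>)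
    ultimately show ?thesis using p by (auto intro: rtranclp_trans)
  next
    case 3
    have "(adj_in sq_adj ?S)\<^sup>*\<^sup>* (a, b) (a, m+1)" by (rule col_path2) (use 3 in \<open>auto simp: nrm_def\<close>)
    moreover have "(adj_in sq_adj ?S)\<^sup>*\<^sup>* (a, m+1) (m+1, m+1)" by (rule row_path2) (use 3 in \<open>auto simp: nrm_def\<close>)
    ultimately show ?thesis using p by (auto intro: rtranclp_trans)
  next
    case 4
    have "(adj_in sq_adj ?S)\<^sup>*\<^sup>* (a, b) (a, m+1)" by (rule col_path2) (use 4 in \<open>auto simp: nrm_def\<close>)
    moreover have "(adj_in sq_adj ?S)\<^sup>*\<^sup>* (a, m+1) (m+1, m+1)" by (rule row_path2) (use 4 assms in \<open>auto simp: nrm_def\<close>)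
    ultimately show ?thesis using p by (auto intro: rtranclp_trans)
  qed
qed

lemma out_conn:
  assumes "nrm p > m" "nrm q > m" "m \<ge> 0"
  shows "(adj_in sq_adj {z. nrm z > m})\<^sup>*\<^sup>* p q"
proof -
  have "(adj_in sq_adj {z. nrm z > m})\<^sup>*\<^sup>* q (m+1, m+1)" using out_conn1 assms by blast
  then have "(adj_in sq_adj {z. nrm z > m})\<^sup>*\<^sup>* (m+1, m+1) q" by (rule rt_sym_sq)
  then show ?thesis using out_conn1[OF assms(1,3)] by (auto intro: rtranclp_trans)
qed

lemma finite_box: "finite {z::site. nrm z \<le> N}"
proof -
  have "{z::site. nrm z \<le> N} \<subseteq> {-N..N} \<times> {-N..N}" by (auto simp: nrm_def)
  then show ?thesis by (rule finite_subset) auto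
qed

lemma infinite_far:
  assumes "infinite A"
  shows "\<exists>z\<in>A. nrm z > N"
proof (rule ccontr)
  assume "\<not> ?thesis"
  then have "A \<subseteq> {z. nrm z \<le> N}" by force
  then show False using assms finite_box finite_subset by blast
qed

lemma infinite_far_from:
  assumes "infinite A"
  shows "\<exists>z\<in>A. dinf z c > N"
proof -
  obtain z where "z \<in> A" "nrm z > N + nrm c" using infinite_far[OF assms] by blast
  moreover have "nrm z \<le> dinf z c + nrm c" unfolding nrm_def dinf_def by arith
  ultimately have "dinf z c > N" by linarith
  then show ?thesis using \<open>z \<in> A\<close> by blast
qed

lemma unique_inf:
  assumes "finite C" "infinite (comp_of sq_adj (- C) x)" "infinite (comp_of sq_adj (- C) y)"
    "x \<notin> C" "y \<notin> C"
  shows "y \<in> comp_of sq_adj (- C) x"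
proof -
  define m where "m = max 0 (Max (insert 0 (nrm ` C)))"
  have mC: "\<And>c. c \<in> C \<Longrightarrow> nrm c \<le> m" unfolding m_def using assms(1) by (auto intro: Max_ge)
  have m0: "m \<ge> 0" unfolding m_def by simp
  obtain x' where x': "x' \<in> comp_of sq_adj (- C) x" "nrm x' > m" using infinite_far[OF assms(2)] by blast
  obtain y' where y': "y' \<in> comp_of sq_adj (- C) y" "nrm y' > m" using infinite_far[OF assms(3)] by blast
  have sub: "{z. nrm z > m} \<subseteq> - C" using mC by force
  have "(adj_in sq_adj {z. nrm z > m})\<^sup>*\<^sup>* x' y'" using out_conn x' y' m0 by blast
  then have "y' \<in> comp_of sq_adj {z. nrm z > m} x'" by (simp add: comp_mem)
  then have "y' \<in> comp_of sq_adj (- C) x'" using comp_mono[OF sub] by blast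
  then have "comp_of sq_adj (- C) y' = comp_of sq_adj (- C) x'" by (rule sq_comp_eq)
  also have "\<dots> = comp_of sq_adj (- C) x" using x'(1) by (rule sq_comp_eq)
  finally have 1: "comp_of sq_adj (- C) y' = comp_of sq_adj (- C) x" .
  have 2: "comp_of sq_adj (- C) y' = comp_of sq_adj (- C) y" using y'(1) by (rule sq_comp_eq)
  show ?thesis using 1 2 comp_self[of y sq_adj "-C"] by simp
qed

lemma bcomp_closed:
  assumes "p \<in> comp_of box_adj B c" "c \<in> B" "q \<in> B" "box_adj p q"
  shows "q \<in> comp_of box_adj B c"
  using comp_step[OF assms(1) _ assms(3,4)] comp_sub[OF assms(2)] assms(1) by blast

lemma bcomp_eq:
  assumes "x \<in> comp_of box_adj B c" "x \<in> comp_of box_adj B c'"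
  shows "comp_of box_adj B c = comp_of box_adj B c'"
  using box_comp_eq[OF assms(1)] box_comp_eq[OF assms(2)] by simp

lemma bcomp_disj:
  "comp_of box_adj B c = comp_of box_adj B c' \<or> comp_of box_adj B c \<inter> comp_of box_adj B c' = {}"
  using bcomp_eq by blast

lemma ray_inf:
  assumes d: "\<bar>fst d\<bar> + \<bar>snd d\<bar> = 1"
    and nc: "\<And>t::nat. (fst p + int t * fst d, snd p + int t * snd d) \<notin> C"
  shows "infinite (comp_of sq_adj (-C) p)"
proof -
  define r where "r t = (fst p + int t * fst d, snd p + int t * snd d)" for t :: nat
  have mem: "r t \<in> comp_of sq_adj (-C) p" for t
  proof (induction t)
    case 0 then show ?case by (simp add: r_def comp_self)
  next
    case (Suc t)
    have sq: "sq_adj (r t) (r (Suc t))" using d unfolding r_def sq_adj_def by (simp add: algebra_simps)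
    have nz: "r t \<in> - C" "r (Suc t) \<in> - C" using nc unfolding r_def by blast+
    show ?case using comp_step[OF Suc nz sq] .
  qed
  have "inj r"
  proof
    fix s t assume "r s = r t"
    then have "int s * fst d = int t * fst d" "int s * snd d = int t * snd d" unfolding r_def by auto
    then show "s = t" using d by (cases "fst d = 0") auto
  qed
  then have "infinite (range r)" by (rule range_inj_infinite)
  moreover have "range r \<subseteq> comp_of sq_adj (-C) p" using mem by blast
  ultimately show ?thesis using finite_subset by blast
qed

lemma ray_r:
  assumes "\<forall>w\<in>C. fst w < fst p"
  shows "infinite (comp_of sq_adj (-C) p)"
proof (rule ray_inf[of "(1::int,0::int)"])
  show "\<bar>fst (1::int,0::int)\<bar> + \<bar>snd (1::int,0::int)\<bar> = 1" by simp
  fix t :: nat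
  show "(fst p + int t * fst (1::int,0::int), snd p + int t * snd (1::int,0::int)) \<notin> C"
  proof
    assume "(fst p + int t * fst (1::int,0::int), snd p + int t * snd (1::int,0::int)) \<in> C"
    with assms have "fst (fst p + int t * fst (1::int,0::int), snd p + int t * snd (1::int,0::int)) < fst p" by blast
    then show False by simp
  qed
qed

lemma ray_l:
  assumes "\<forall>w\<in>C. fst w > fst p"
  shows "infinite (comp_of sq_adj (-C) p)"
proof (rule ray_inf[of "(-1::int,0::int)"])
  show "\<bar>fst (-1::int,0::int)\<bar> + \<bar>snd (-1::int,0::int)\<bar> = 1" by simp
  fix t :: nat
  show "(fst p + int t * fst (-1::int,0::int), snd p + int t * snd (-1::int,0::int)) \<notin> C"
  proof
    assume "(fst p + int t * fst (-1::int,0::int), snd p + int t * snd (-1::int,0::int)) \<in> C"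
    with assms have "fst (fst p + int t * fst (-1::int,0::int), snd p + int t * snd (-1::int,0::int)) > fst p" by blast
    then show False by simp
  qed
qed

lemma ray_u:
  assumes "\<forall>w\<in>C. snd w < snd p"
  shows "infinite (comp_of sq_adj (-C) p)"
proof (rule ray_inf[of "(0::int,1::int)"])
  show "\<bar>fst (0::int,1::int)\<bar> + \<bar>snd (0::int,1::int)\<bar> = 1" by simp
  fix t :: nat
  show "(fst p + int t * fst (0::int,1::int), snd p + int t * snd (0::int,1::int)) \<notin> C"
  proof
    assume "(fst p + int t * fst (0::int,1::int), snd p + int t * snd (0::int,1::int)) \<in> C"
    with assms have "snd (fst p + int t * fst (0::int,1::int), snd p + int t * snd (0::int,1::int)) < snd p" by blast
    then show False by simp
  qed
qed

lemma ray_d: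
  assumes "\<forall>w\<in>C. snd w > snd p"
  shows "infinite (comp_of sq_adj (-C) p)"
proof (rule ray_inf[of "(0::int,-1::int)"])
  show "\<bar>fst (0::int,-1::int)\<bar> + \<bar>snd (0::int,-1::int)\<bar> = 1" by simp
  fix t :: nat
  show "(fst p + int t * fst (0::int,-1::int), snd p + int t * snd (0::int,-1::int)) \<notin> C"
  proof
    assume "(fst p + int t * fst (0::int,-1::int), snd p + int t * snd (0::int,-1::int)) \<in> C"
    with assms have "snd (fst p + int t * fst (0::int,-1::int), snd p + int t * snd (0::int,-1::int)) > snd p" by blast
    then show False by simp
  qed
qed

lemma fill_bb:
  assumes "p \<in> fill C"
  shows "\<exists>w\<in>C. fst w \<ge> fst p" "\<exists>w\<in>C. fst w \<le> fst p" "\<exists>w\<in>C. snd w \<ge> snd p" "\<exists>w\<in>C. snd w \<le> snd p"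
proof -
  have fc: "p \<in> C \<or> finite (comp_of sq_adj (-C) p)" using assms unfolding fill_def by auto
  show "\<exists>w\<in>C. fst w \<ge> fst p"
  proof (rule ccontr)
    assume a: "\<not> (\<exists>w\<in>C. fst w \<ge> fst p)"
    then have "\<forall>w\<in>C. fst w < fst p" by (simp add: not_le)
    then have "infinite (comp_of sq_adj (-C) p)" by (rule ray_r)
    moreover have "p \<notin> C" using a by auto
    ultimately show False using fc by blast
  qed
  show "\<exists>w\<in>C. fst w \<le> fst p"
  proof (rule ccontr)
    assume a: "\<not> (\<exists>w\<in>C. fst w \<le> fst p)"
    then have "\<forall>w\<in>C. fst w > fst p" by (simp add: not_le)
    then have "infinite (comp_of sq_adj (-C) p)" by (rule ray_l)
    moreover have "p \<notin> C" using a by auto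
    ultimately show False using fc by blast
  qed
  show "\<exists>w\<in>C. snd w \<ge> snd p"
  proof (rule ccontr)
    assume a: "\<not> (\<exists>w\<in>C. snd w \<ge> snd p)"
    then have "\<forall>w\<in>C. snd w < snd p" by (simp add: not_le)
    then have "infinite (comp_of sq_adj (-C) p)" by (rule ray_u)
    moreover have "p \<notin> C" using a by auto
    ultimately show False using fc by blast
  qed
  show "\<exists>w\<in>C. snd w \<le> snd p"
  proof (rule ccontr)
    assume a: "\<not> (\<exists>w\<in>C. snd w \<le> snd p)"
    then have "\<forall>w\<in>C. snd w > snd p" by (simp add: not_le)
    then have "infinite (comp_of sq_adj (-C) p)" by (rule ray_d)
    moreover have "p \<notin> C" using a by auto
    ultimately show False using fc by blast
  qed
qed

lemma fill_step:
  assumes "y \<in> fill C" "y \<notin> C" "z \<notin> C" "sq_adj y z"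
  shows "z \<in> fill C"
proof -
  have fin: "finite (comp_of sq_adj (-C) y)" using assms unfolding fill_def by auto
  have "z \<in> comp_of sq_adj (-C) y" using comp_step[OF comp_self] assms by auto
  then have "comp_of sq_adj (-C) z = comp_of sq_adj (-C) y" by (rule sq_comp_eq)
  then show ?thesis using fin assms(3) unfolding fill_def by auto
qed

lemma comp_in_sqcomp:
  assumes "c \<in> B" "comp_of box_adj B c \<inter> C' = {}" "C' \<subseteq> B"
    "\<And>p q. p \<in> C' \<Longrightarrow> q \<in> B \<Longrightarrow> box_adj p q \<Longrightarrow> q \<in> C'"
    "u \<in> comp_of box_adj B c"
  shows "u \<in> comp_of sq_adj (- C') c"
proof -
  let ?C = "comp_of box_adj B c"
  have "(adj_in box_adj B)\<^sup>*\<^sup>* c u" using assms(5) by (simp add: comp_mem)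
  then show ?thesis
  proof (induction rule: rtranclp_induct)
    case base then show ?case by (simp add: comp_self)
  next
    case (step b z)
    have bC: "b \<in> ?C" using step(1) by (simp add: comp_mem)
    have zC: "z \<in> ?C" using step(1,2) by (simp add: comp_mem)
    have adj: "box_adj b z" "b \<in> B" "z \<in> B" using step(2) by (auto simp: adj_in_def)
    have bn: "b \<in> - C'" "z \<in> - C'" using bC zC assms(2) by auto
    from box_cases[OF adj(1)] show ?case
    proof
      assume "sq_adj b z"
      then show ?thesis using comp_step[OF step(3) bn] by simp
    next
      assume h: "sq_adj b (fst z, snd b) \<and> sq_adj (fst z, snd b) z"
      have rn: "(fst z, snd b) \<in> - C'"
      proof
        assume "(fst z, snd b) \<in> C'"
        then have "(fst z, snd b) \<in> B" "b \<in> C'" using assms(3,4) h adj sq_box box_adj_sym by blast+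
        then show False using bC assms(2) by blast
      qed
      have "(fst z, snd b) \<in> comp_of sq_adj (- C') c"
        using comp_step[OF step(3) bn(1) rn] h by blast
      then show ?thesis using comp_step[OF _ rn bn(2)] h by blast
    qed
  qed
qed

lemma fin_boundary:
  assumes "y \<notin> C" "finite (comp_of sq_adj (-C) y)"
  shows "\<exists>h \<in> comp_of sq_adj (-C) y. \<exists>c\<in>C. sq_adj h c"
proof -
  let ?H = "comp_of sq_adj (-C) y"
  define r where "r t = (fst y + int t, snd y)" for t :: nat
  have "inj r" unfolding r_def inj_def by auto
  then have "infinite (range r)" using finite_imageD by blast
  then have "\<exists>t. r t \<notin> ?H" using assms(2) by (meson finite_subset image_subset_iff)
  define t0 where "t0 = (LEAST t. r t \<notin> ?H)"
  have t0: "r t0 \<notin> ?H" unfolding t0_def by (rule LeastI_ex) fact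
  have "r 0 \<in> ?H" by (simp add: r_def comp_self)
  have "t0 \<noteq> 0"
  proof
    assume "t0 = 0" then show False using t0 \<open>r 0 \<in> ?H\<close> by simp
  qed
  then have "r (t0 - 1) \<in> ?H" using not_less_Least[of "t0 - 1" "\<lambda>t. r t \<notin> ?H"] unfolding t0_def[symmetric] by auto
  moreover have sq: "sq_adj (r (t0 - 1)) (r t0)" using \<open>t0 \<noteq> 0\<close> unfolding r_def sq_adj_def by auto
  moreover have "r t0 \<in> C"
  proof (rule ccontr)
    assume "r t0 \<notin> C"
    moreover have "r (t0 - 1) \<in> -C" using comp_sub[of y "-C" sq_adj] assms(1) \<open>r (t0 - 1) \<in> ?H\<close> by auto
    ultimately have "r t0 \<in> ?H" using comp_step[OF \<open>r (t0 - 1) \<in> ?H\<close>] sq by auto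
    then show False using t0 by blast
  qed
  ultimately show ?thesis by blast
qed

locale comps =
  fixes B :: "site set"
begin

definition "cmp c = comp_of box_adj B c"

lemma cmp_sub: "c \<in> B \<Longrightarrow> cmp c \<subseteq> B" unfolding cmp_def by (rule comp_sub)
lemma cmp_self: "c \<in> cmp c" unfolding cmp_def by (rule comp_self)
lemma cmp_closed: "p \<in> cmp c \<Longrightarrow> c \<in> B \<Longrightarrow> q \<in> B \<Longrightarrow> box_adj p q \<Longrightarrow> q \<in> cmp c"
  unfolding cmp_def by (rule bcomp_closed)
lemma cmp_disj: "cmp c = cmp c' \<or> cmp c \<inter> cmp c' = {}"
  unfolding cmp_def by (rule bcomp_disj)
lemma cmp_eq: "x \<in> cmp c \<Longrightarrow> cmp x = cmp c"
  unfolding cmp_def by (rule box_comp_eq)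

lemma cmp_in_sq:
  assumes "c \<in> B" "c' \<in> B" "cmp c \<inter> cmp c' = {}" "u \<in> cmp c" "v \<in> cmp c"
  shows "v \<in> comp_of sq_adj (- cmp c') u"
proof -
  have h: "w \<in> comp_of sq_adj (- cmp c') c" if "w \<in> cmp c" for w
    using comp_in_sqcomp[of c B "cmp c'" w] assms(1,2,3) that cmp_sub cmp_closed
    unfolding cmp_def by blast
  have "comp_of sq_adj (- cmp c') u = comp_of sq_adj (- cmp c') c" using h[OF assms(4)] by (rule sq_comp_eq)
  then show ?thesis using h[OF assms(5)] by simp
qed

lemma nest1:
  assumes "c \<in> B" "c' \<in> B" "cmp c \<inter> cmp c' = {}" "x \<in> cmp c" "x \<in> fill (cmp c')"
  shows "fill (cmp c) \<subseteq> fill (cmp c')"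
proof
  let ?C = "cmp c" and ?C' = "cmp c'"
  have xn: "x \<notin> ?C'" using assms(3,4) by blast
  have finx: "finite (comp_of sq_adj (- ?C') x)" using assms(5) xn unfolding fill_def by auto
  have allC: "comp_of sq_adj (- ?C') u = comp_of sq_adj (- ?C') x" if "u \<in> ?C" for u
    using cmp_in_sq[OF assms(1,2,3) assms(4) that] by (rule sq_comp_eq)
  fix y assume y: "y \<in> fill ?C"
  show "y \<in> fill ?C'"
  proof (cases "y \<in> ?C")
    case True
    then show ?thesis using allC[OF True] finx assms(3) unfolding fill_def by auto
  next
    case False
    then have finH: "finite (comp_of sq_adj (- ?C) y)" using y unfolding fill_def by auto
    show ?thesis
    proof (rule ccontr)
      assume yn: "y \<notin> fill ?C'"
      then have yC': "y \<notin> ?C'" and infG: "infinite (comp_of sq_adj (- ?C') y)" unfolding fill_def by auto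
      let ?G = "comp_of sq_adj (- ?C') y"
      show False
      proof (cases "?G \<inter> ?C = {}")
        case True
        have "?G \<subseteq> comp_of sq_adj (- ?C' \<inter> - ?C) y"
          by (rule comp_restrict) (use True False in auto)
        also have "\<dots> \<subseteq> comp_of sq_adj (- ?C) y" by (rule comp_mono) auto
        finally show False using finH infG finite_subset by blast
      next
        case False
        then obtain w where w: "w \<in> ?G" "w \<in> ?C" by blast
        have "comp_of sq_adj (- ?C') w = ?G" using w(1) by (rule sq_comp_eq)
        then show False using allC[OF w(2)] finx infG by simp
      qed
    qed
  qed
qed

lemma nest2:
  assumes "c \<in> B" "c' \<in> B" "cmp c \<inter> cmp c' = {}"
    "\<forall>x\<in>cmp c. x \<notin> fill (cmp c')" "\<forall>x\<in>cmp c'. x \<notin> fill (cmp c)"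
  shows "fill (cmp c) \<inter> fill (cmp c') = {}"
proof (rule ccontr)
  let ?C = "cmp c" and ?C' = "cmp c'"
  assume "\<not> ?thesis"
  then obtain x where x: "x \<in> fill ?C" "x \<in> fill ?C'" by blast
  have xC: "x \<notin> ?C" using x assms(4) by blast
  have xC': "x \<notin> ?C'" using x assms(5) by blast
  let ?H = "comp_of sq_adj (- ?C) x" and ?H' = "comp_of sq_adj (- ?C') x"
  have finH: "finite ?H" using x xC unfolding fill_def by auto
  have finH': "finite ?H'" using x xC' unfolding fill_def by auto
  have HC': "?H \<inter> ?C' = {}"
  proof (rule ccontr)
    assume "?H \<inter> ?C' \<noteq> {}"
    then obtain w where w: "w \<in> ?H" "w \<in> ?C'" by blast
    have "w \<notin> ?C" using w assms(3) by blast
    moreover have "comp_of sq_adj (- ?C) w = ?H" using w(1) by (rule sq_comp_eq)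
    ultimately have "w \<in> fill ?C" using finH unfolding fill_def by auto
    then show False using w assms(5) by blast
  qed
  have "?H \<subseteq> comp_of sq_adj (- ?C \<inter> - ?C') x" by (rule comp_restrict) (use HC' xC' in auto)
  also have "\<dots> \<subseteq> ?H'" by (rule comp_mono) auto
  finally have HH: "?H \<subseteq> ?H'" .
  obtain h c0 where h: "h \<in> ?H" "c0 \<in> ?C" "sq_adj h c0" using fin_boundary[OF xC finH] by blast
  have "h \<in> ?H'" "h \<in> - ?C'" using h HH HC' by auto
  moreover have "c0 \<in> - ?C'" using h(2) assms(3) by blast
  ultimately have "c0 \<in> ?H'" using comp_step[of h sq_adj "- ?C'" x c0] h(3) by blast
  then have "comp_of sq_adj (- ?C') c0 = ?H'" by (rule sq_comp_eq)
  then have "c0 \<in> fill ?C'" using finH' \<open>c0 \<in> - ?C'\<close> unfolding fill_def by auto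
  then show False using h(2) assms(4) by blast
qed

lemma nest:
  assumes "c \<in> B" "c' \<in> B" "fill (cmp c) \<inter> fill (cmp c') \<noteq> {}"
  shows "fill (cmp c) \<subseteq> fill (cmp c') \<or> fill (cmp c') \<subseteq> fill (cmp c)"
proof (cases "cmp c = cmp c'")
  case True then show ?thesis by simp
next
  case False
  then have d: "cmp c \<inter> cmp c' = {}" using cmp_disj by blast
  then have d': "cmp c' \<inter> cmp c = {}" by blast
  show ?thesis
  proof (cases "\<exists>x\<in>cmp c. x \<in> fill (cmp c')")
    case True
    then show ?thesis using nest1[OF assms(1,2) d] by blast
  next
    case F1: False
    show ?thesis
    proof (cases "\<exists>x\<in>cmp c'. x \<in> fill (cmp c)")
      case True
      then show ?thesis using nest1[OF assms(2,1) d'] by blast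
    next
      case False
      then show ?thesis using nest2[OF assms(1,2) d] F1 assms(3) by blast
    qed
  qed
qed

lemma adj_sq:
  assumes "c \<in> B" "c' \<in> B" "p \<in> fill (cmp c)" "q \<in> fill (cmp c')" "sq_adj p q"
  shows "q \<in> fill (cmp c) \<or> p \<in> fill (cmp c')"
proof (cases "q \<in> cmp c")
  case True then show ?thesis unfolding fill_def by auto
next
  case qC: False
  show ?thesis
  proof (cases "p \<in> cmp c")
    case False
    then show ?thesis using fill_step[OF assms(3) False qC assms(5)] by blast
  next
    case pC: True
    show ?thesis
    proof (cases "q \<in> cmp c'")
      case True
      then have "q \<in> B" using cmp_sub assms(2) by blast
      then have "q \<in> cmp c" using cmp_closed[OF pC assms(1)] sq_box[OF assms(5)] by blast
      then show ?thesis using qC by blast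
    next
      case qC': False
      show ?thesis
      proof (cases "p \<in> cmp c'")
        case True then show ?thesis unfolding fill_def by auto
      next
        case False
        then show ?thesis using fill_step[OF assms(4) qC' False sq_adj_sym[OF assms(5)]] by blast
      qed
    qed
  qed
qed

lemma adj_box:
  assumes "c \<in> B" "c' \<in> B" "p \<in> fill (cmp c)" "q \<in> fill (cmp c')" "box_adj p q"
  shows "fill (cmp c) \<inter> fill (cmp c') \<noteq> {}"
proof -
  from box_cases[OF assms(5)] show ?thesis
  proof
    assume "sq_adj p q"
    then show ?thesis using adj_sq[OF assms(1-4)] assms(3,4) by blast
  next
    assume h: "sq_adj p (fst q, snd p) \<and> sq_adj (fst q, snd p) q"
    let ?r = "(fst q, snd p)"
    show ?thesis
    proof (cases "p \<in> cmp c \<and> q \<in> cmp c'")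
      case True
      then have "q \<in> B" using cmp_sub assms(2) by blast
      then have "q \<in> cmp c" using cmp_closed[of p c q] True assms(1,5) by blast
      then show ?thesis using assms(4) unfolding fill_def by auto
    next
      case False
      then consider "q \<notin> cmp c'" | "p \<notin> cmp c" by blast
      then show ?thesis
      proof cases
        case 1
        have "?r \<in> fill (cmp c')"
          using fill_step[OF assms(4) 1 _ sq_adj_sym] h unfolding fill_def by blast
        then show ?thesis using adj_sq[OF assms(1,2,3) _ ] h assms(3) by blast
      next
        case 2
        have "?r \<in> fill (cmp c)"
          using fill_step[OF assms(3) 2 _] h unfolding fill_def by blast
        then show ?thesis using adj_sq[OF assms(1,2) _ assms(4)] h assms(4) by blast
      qed
    qed
  qed
qed

end


lemma box_fst: "box_adj a b \<Longrightarrow> \<bar>fst a - fst b\<bar> \<le> 1" unfolding box_adj_def by simp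
lemma box_snd: "box_adj a b \<Longrightarrow> \<bar>snd a - snd b\<bar> \<le> 1" unfolding box_adj_def by simp

lemma lin4:
  fixes fv fp m np X :: int
  shows "\<bar>fv\<bar> \<le> \<bar>fv - fp\<bar> + \<bar>fp\<bar> \<Longrightarrow> \<bar>fv - fp\<bar> \<le> m \<Longrightarrow> \<bar>fp\<bar> \<le> np \<Longrightarrow> X \<le> 2 * m \<Longrightarrow> 2 * np \<le> 3 * X \<Longrightarrow> \<bar>fv\<bar> \<le> 4 * m"
  by linarith

lemma lin5:
  fixes sv sp m np X :: int
  shows "\<bar>sv\<bar> = \<bar>sp\<bar> \<Longrightarrow> \<bar>sp\<bar> \<le> np \<Longrightarrow> X \<le> 2 * m \<Longrightarrow> 2 * np \<le> 3 * X \<Longrightarrow> \<bar>sv\<bar> \<le> 4 * m"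
  by linarith

lemma ivt:
  assumes "(adj_in box_adj X)\<^sup>*\<^sup>* u w" "\<And>a b. box_adj a b \<Longrightarrow> \<bar>f a - f b\<bar> \<le> (1::int)"
    "min (f u) (f w) \<le> t" "t \<le> max (f u) (f w)"
  shows "\<exists>v. (adj_in box_adj X)\<^sup>*\<^sup>* u v \<and> f v = t"
  using assms(1,3,4)
proof (induction rule: rtranclp_induct)
  case base
  then have "t = f u" by simp
  then show ?case by blast
next
  case (step b z)
  show ?case
  proof (cases "min (f u) (f b) \<le> t \<and> t \<le> max (f u) (f b)")
    case True then show ?thesis using step(3) by blast
  next
    case False
    have "\<bar>f b - f z\<bar> \<le> 1" using step(2) assms(2) unfolding adj_in_def by blast
    then have "t = f z" using False step(4,5) by arith
    then show ?thesis using step(1,2) by (blast intro: rtranclp.rtrancl_into_rtrancl)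
  qed
qed

lemma sq_box_rt: "(adj_in sq_adj X)\<^sup>*\<^sup>* u v \<Longrightarrow> (adj_in box_adj X)\<^sup>*\<^sup>* u v"
proof -
  assume h: "(adj_in sq_adj X)\<^sup>*\<^sup>* u v"
  have "adj_in sq_adj X \<le> adj_in box_adj X" unfolding adj_in_def using sq_box by auto
  then have "(adj_in sq_adj X)\<^sup>*\<^sup>* \<le> (adj_in box_adj X)\<^sup>*\<^sup>*" by (rule rtranclp_mono)
  then show ?thesis using h by auto
qed

context comps
begin

definition "NF = (\<Union>c\<in>B. fill (cmp c))"

definition "Good K \<longleftrightarrow> (\<forall>n\<ge>K. \<forall>v w. v \<in> B \<longrightarrow> w \<in> cmp v \<longrightarrow> nrm v \<le> 4 * int n \<longrightarrow> dinf w v < int n)"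

lemma GoodD: "Good K \<Longrightarrow> n \<ge> K \<Longrightarrow> v \<in> B \<Longrightarrow> w \<in> cmp v \<Longrightarrow> nrm v \<le> 4 * int n \<Longrightarrow> dinf w v < int n"
  unfolding Good_def by blast

lemma cmp_path:
  assumes "u \<in> cmp c" "w \<in> cmp c"
  shows "(adj_in box_adj B)\<^sup>*\<^sup>* u w"
proof -
  have "(adj_in box_adj B)\<^sup>*\<^sup>* c u" "(adj_in box_adj B)\<^sup>*\<^sup>* c w" using assms by (simp_all add: cmp_def comp_mem)
  then have "(adj_in box_adj B)\<^sup>*\<^sup>* u c" "(adj_in box_adj B)\<^sup>*\<^sup>* c w" by (simp_all add: rt_sym_box)
  then show ?thesis by (rule rtranclp_trans)
qed

lemma bb_x:
  assumes G: "Good K" and c: "c \<in> B" and p: "p \<in> fill (cmp c)" and q: "q \<in> fill (cmp c)"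
    and d1: "\<bar>fst p - fst q\<bar> \<ge> 2 * int K" and d2: "3 * \<bar>fst p - fst q\<bar> \<ge> 2 * nrm p"
  shows False
proof -
  let ?C = "cmp c"
  obtain w1 where w1: "w1 \<in> ?C" "snd w1 \<le> snd p" using fill_bb(4)[OF p] by blast
  obtain w2 where w2: "w2 \<in> ?C" "snd w2 \<ge> snd p" using fill_bb(3)[OF p] by blast
  have "(adj_in box_adj B)\<^sup>*\<^sup>* w1 w2" using cmp_path w1 w2 by blast
  then obtain v where v: "(adj_in box_adj B)\<^sup>*\<^sup>* w1 v" "snd v = snd p"
    using ivt[of B w1 w2 snd "snd p"] box_snd w1 w2 by force
  have "(adj_in box_adj B)\<^sup>*\<^sup>* c w1" using w1(1) by (simp add: cmp_def comp_mem)
  then have "(adj_in box_adj B)\<^sup>*\<^sup>* c v" using v(1) by (rule rtranclp_trans)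
  then have vC: "v \<in> ?C" by (simp add: cmp_def comp_mem)
  have vB: "v \<in> B" using vC cmp_sub c by blast
  have cv: "cmp v = ?C" using vC by (rule cmp_eq)
  obtain l1 where l1: "l1 \<in> ?C" "fst l1 \<le> fst p" using fill_bb(2)[OF p] by blast
  obtain l2 where l2: "l2 \<in> ?C" "fst l2 \<le> fst q" using fill_bb(2)[OF q] by blast
  obtain r1 where r1: "r1 \<in> ?C" "fst r1 \<ge> fst p" using fill_bb(1)[OF p] by blast
  obtain r2 where r2: "r2 \<in> ?C" "fst r2 \<ge> fst q" using fill_bb(1)[OF q] by blast
  define a1 where "a1 = \<bar>fst l1 - fst v\<bar>"
  define a2 where "a2 = \<bar>fst l2 - fst v\<bar>"
  define a3 where "a3 = \<bar>fst r1 - fst v\<bar>"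
  define a4 where "a4 = \<bar>fst r2 - fst v\<bar>"
  define m where "m = max (max a1 a2) (max a3 a4)"
  have ma: "a1 \<le> m" "a2 \<le> m" "a3 \<le> m" "a4 \<le> m" unfolding m_def by auto
  have meq: "m = a1 \<or> m = a2 \<or> m = a3 \<or> m = a4" unfolding m_def max_def by auto
  have b1: "fst l1 - fst v \<le> a1" "fst v - fst l1 \<le> a1" unfolding a1_def by auto
  have b2: "fst l2 - fst v \<le> a2" "fst v - fst l2 \<le> a2" unfolding a2_def by auto
  have b3: "fst r1 - fst v \<le> a3" "fst v - fst r1 \<le> a3" unfolding a3_def by auto
  have b4: "fst r2 - fst v \<le> a4" "fst v - fst r2 \<le> a4" unfolding a4_def by auto
  have m0: "m \<ge> 0" using ma(1) unfolding a1_def by linarith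
  have "fst p - fst q \<le> 2 * m" "fst q - fst p \<le> 2 * m" using ma b1 b2 b3 b4 l1 l2 r1 r2 by linarith+
  then have pq: "\<bar>fst p - fst q\<bar> \<le> 2 * m" by (simp add: abs_le_iff)
  have mK: "int K \<le> m" using pq d1 by linarith
  have "fst v - fst p \<le> m" "fst p - fst v \<le> m" using ma b1 b3 l1 r1 by linarith+
  then have vp: "\<bar>fst v - fst p\<bar> \<le> m" by (simp add: abs_le_iff)
  have np: "\<bar>fst p\<bar> \<le> nrm p" "\<bar>snd p\<bar> \<le> nrm p" unfolding nrm_def by auto
  have tri: "\<bar>fst v\<bar> \<le> \<bar>fst v - fst p\<bar> + \<bar>fst p\<bar>" by arith
  have "\<bar>fst v\<bar> \<le> 4 * m" by (rule lin4[OF tri vp np(1) pq d2])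
  moreover have "\<bar>snd v\<bar> = \<bar>snd p\<bar>" using v(2) by simp
  moreover have "\<bar>snd v\<bar> \<le> 4 * m" using calculation(2) np(2) pq d2 by (rule lin5)
  ultimately have nv: "nrm v \<le> 4 * m" unfolding nrm_def by (simp del: abs_le_iff)
  define n where "n = nat m"
  have n: "int n = m" "n \<ge> K" using m0 mK unfolding n_def by auto
  have nv': "nrm v \<le> 4 * int n" using nv n(1) by simp
  have lt: "dinf w v < m" if "w \<in> ?C" for w
    using GoodD[OF G n(2) vB _ nv'] that cv n(1) by simp
  have dw: "\<bar>fst w - fst v\<bar> \<le> dinf w v" for w unfolding dinf_def by simp
  have "a1 < m" unfolding a1_def using dw[of l1] lt[OF l1(1)] by linarith
  moreover have "a2 < m" unfolding a2_def using dw[of l2] lt[OF l2(1)] by linarith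
  moreover have "a3 < m" unfolding a3_def using dw[of r1] lt[OF r1(1)] by linarith
  moreover have "a4 < m" unfolding a4_def using dw[of r2] lt[OF r2(1)] by linarith
  ultimately show False using meq by auto
qed

lemma bb_y:
  assumes G: "Good K" and c: "c \<in> B" and p: "p \<in> fill (cmp c)" and q: "q \<in> fill (cmp c)"
    and d1: "\<bar>snd p - snd q\<bar> \<ge> 2 * int K" and d2: "3 * \<bar>snd p - snd q\<bar> \<ge> 2 * nrm p"
  shows False
proof -
  let ?C = "cmp c"
  obtain w1 where w1: "w1 \<in> ?C" "fst w1 \<le> fst p" using fill_bb(2)[OF p] by blast
  obtain w2 where w2: "w2 \<in> ?C" "fst w2 \<ge> fst p" using fill_bb(1)[OF p] by blast
  have "(adj_in box_adj B)\<^sup>*\<^sup>* w1 w2" using cmp_path w1 w2 by blast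
  then obtain v where v: "(adj_in box_adj B)\<^sup>*\<^sup>* w1 v" "fst v = fst p"
    using ivt[of B w1 w2 fst "fst p"] box_fst w1 w2 by force
  have "(adj_in box_adj B)\<^sup>*\<^sup>* c w1" using w1(1) by (simp add: cmp_def comp_mem)
  then have "(adj_in box_adj B)\<^sup>*\<^sup>* c v" using v(1) by (rule rtranclp_trans)
  then have vC: "v \<in> ?C" by (simp add: cmp_def comp_mem)
  have vB: "v \<in> B" using vC cmp_sub c by blast
  have cv: "cmp v = ?C" using vC by (rule cmp_eq)
  obtain l1 where l1: "l1 \<in> ?C" "snd l1 \<le> snd p" using fill_bb(4)[OF p] by blast
  obtain l2 where l2: "l2 \<in> ?C" "snd l2 \<le> snd q" using fill_bb(4)[OF q] by blast
  obtain r1 where r1: "r1 \<in> ?C" "snd r1 \<ge> snd p" using fill_bb(3)[OF p] by blast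
  obtain r2 where r2: "r2 \<in> ?C" "snd r2 \<ge> snd q" using fill_bb(3)[OF q] by blast
  define a1 where "a1 = \<bar>snd l1 - snd v\<bar>"
  define a2 where "a2 = \<bar>snd l2 - snd v\<bar>"
  define a3 where "a3 = \<bar>snd r1 - snd v\<bar>"
  define a4 where "a4 = \<bar>snd r2 - snd v\<bar>"
  define m where "m = max (max a1 a2) (max a3 a4)"
  have ma: "a1 \<le> m" "a2 \<le> m" "a3 \<le> m" "a4 \<le> m" unfolding m_def by auto
  have meq: "m = a1 \<or> m = a2 \<or> m = a3 \<or> m = a4" unfolding m_def max_def by auto
  have b1: "snd l1 - snd v \<le> a1" "snd v - snd l1 \<le> a1" unfolding a1_def by auto
  have b2: "snd l2 - snd v \<le> a2" "snd v - snd l2 \<le> a2" unfolding a2_def by auto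
  have b3: "snd r1 - snd v \<le> a3" "snd v - snd r1 \<le> a3" unfolding a3_def by auto
  have b4: "snd r2 - snd v \<le> a4" "snd v - snd r2 \<le> a4" unfolding a4_def by auto
  have m0: "m \<ge> 0" using ma(1) unfolding a1_def by linarith
  have "snd p - snd q \<le> 2 * m" "snd q - snd p \<le> 2 * m" using ma b1 b2 b3 b4 l1 l2 r1 r2 by linarith+
  then have pq: "\<bar>snd p - snd q\<bar> \<le> 2 * m" by (simp add: abs_le_iff)
  have mK: "int K \<le> m" using pq d1 by linarith
  have "snd v - snd p \<le> m" "snd p - snd v \<le> m" using ma b1 b3 l1 r1 by linarith+
  then have vp: "\<bar>snd v - snd p\<bar> \<le> m" by (simp add: abs_le_iff)
  have np: "\<bar>snd p\<bar> \<le> nrm p" "\<bar>fst p\<bar> \<le> nrm p" unfolding nrm_def by auto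
  have tri: "\<bar>snd v\<bar> \<le> \<bar>snd v - snd p\<bar> + \<bar>snd p\<bar>" by arith
  have "\<bar>snd v\<bar> \<le> 4 * m" by (rule lin4[OF tri vp np(1) pq d2])
  moreover have "\<bar>fst v\<bar> = \<bar>fst p\<bar>" using v(2) by simp
  moreover have "\<bar>fst v\<bar> \<le> 4 * m" using calculation(2) np(2) pq d2 by (rule lin5)
  ultimately have nv: "nrm v \<le> 4 * m" unfolding nrm_def by (simp del: abs_le_iff)
  define n where "n = nat m"
  have n: "int n = m" "n \<ge> K" using m0 mK unfolding n_def by auto
  have nv': "nrm v \<le> 4 * int n" using nv n(1) by simp
  have lt: "dinf w v < m" if "w \<in> ?C" for w
    using GoodD[OF G n(2) vB _ nv'] that cv n(1) by simp
  have dw: "\<bar>snd w - snd v\<bar> \<le> dinf w v" for w unfolding dinf_def by simp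
  have "a1 < m" unfolding a1_def using dw[of l1] lt[OF l1(1)] by linarith
  moreover have "a2 < m" unfolding a2_def using dw[of l2] lt[OF l2(1)] by linarith
  moreover have "a3 < m" unfolding a3_def using dw[of r1] lt[OF r1(1)] by linarith
  moreover have "a4 < m" unfolding a4_def using dw[of r2] lt[OF r2(1)] by linarith
  ultimately show False using meq by auto
qed

lemma bb:
  assumes "Good K" "c \<in> B" "p \<in> fill (cmp c)" "q \<in> fill (cmp c)"
    "dinf p q \<ge> 2 * int K" "3 * dinf p q \<ge> 2 * nrm p"
  shows False
proof (cases "\<bar>fst p - fst q\<bar> \<ge> \<bar>snd p - snd q\<bar>")
  case True
  then have "dinf p q = \<bar>fst p - fst q\<bar>" unfolding dinf_def by simp
  then show False using bb_x[OF assms(1-4)] assms(5,6) by simp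
next
  case False
  then have "dinf p q = \<bar>snd p - snd q\<bar>" unfolding dinf_def by simp
  then show False using bb_y[OF assms(1-4)] assms(5,6) by simp
qed

lemma walk_fill:
  assumes "(adj_in box_adj X)\<^sup>*\<^sup>* d0 d" "d0 \<in> X" "X \<subseteq> NF"
  shows "\<exists>c\<in>B. d0 \<in> fill (cmp c) \<and> d \<in> fill (cmp c)"
  using assms(1)
proof (induction rule: rtranclp_induct)
  case base then show ?case using assms(2,3) unfolding NF_def by blast
next
  case (step b z)
  obtain c where c: "c \<in> B" "d0 \<in> fill (cmp c)" "b \<in> fill (cmp c)" using step(3) by blast
  have "z \<in> X" "box_adj b z" using step(2) unfolding adj_in_def by auto
  then obtain c' where c': "c' \<in> B" "z \<in> fill (cmp c')" using assms(3) unfolding NF_def by blast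
  have "fill (cmp c) \<inter> fill (cmp c') \<noteq> {}" using adj_box[OF c(1) c'(1) c(3) c'(2) \<open>box_adj b z\<close>] .
  then have "fill (cmp c) \<subseteq> fill (cmp c') \<or> fill (cmp c') \<subseteq> fill (cmp c)" using nest c(1) c'(1) by blast
  then show ?case using c c' by blast
qed

lemma segment_free:
  assumes G: "Good K" and L: "L \<ge> 1" "L \<ge> 2 * int K"
  shows "\<exists>x. L \<le> x \<and> x \<le> 2 * L \<and> (x, 0) \<notin> NF"
proof (rule ccontr)
  assume na: "\<not> ?thesis"
  define X where "X = {z::site. snd z = 0 \<and> L \<le> fst z \<and> fst z \<le> 2 * L}"
  have sub: "X \<subseteq> NF"
  proof
    fix z assume "z \<in> X"
    then have "z = (fst z, 0)" "L \<le> fst z" "fst z \<le> 2 * L" unfolding X_def by (auto simp: prod_eq_iff)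
    then show "z \<in> NF" using na by metis
  qed
  have mm: "min L (2 * L) = L" "max L (2 * L) = 2 * L" using L by auto
  have "(adj_in sq_adj X)\<^sup>*\<^sup>* (L, 0) (2 * L, 0)"
  proof (rule row_path2)
    fix x assume "min L (2 * L) \<le> x" "x \<le> max L (2 * L)"
    then show "(x, 0) \<in> X" unfolding X_def mm by simp
  qed
  then have p: "(adj_in box_adj X)\<^sup>*\<^sup>* (L, 0) (2 * L, 0)" by (rule sq_box_rt)
  have mem: "(L, 0) \<in> X" unfolding X_def using L by simp
  obtain c where c: "c \<in> B" "(L, 0) \<in> fill (cmp c)" "(2 * L, 0) \<in> fill (cmp c)"
    using walk_fill[OF p mem sub] by blast
  have d: "dinf (L, 0) (2 * L, 0) = L" unfolding dinf_def using L by simp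
  have n: "nrm (L, 0) = L" unfolding nrm_def using L by simp
  show False using bb[OF G c] d n L by linarith
qed

lemma good_fin:
  assumes G: "Good K" and c: "c \<in> B"
  shows "finite (cmp c)"
proof (rule ccontr)
  assume "infinite (cmp c)"
  then obtain w where w: "w \<in> cmp c" "dinf w c > max (int K) (nrm c)" using infinite_far_from by blast
  define n where "n = nat (max (int K) (nrm c))"
  have "n \<ge> K" "nrm c \<le> 4 * int n" "int n = max (int K) (nrm c)" unfolding n_def by auto
  then have "dinf w c < int n" using GoodD[OF G _ c w(1)] by blast
  then show False using w(2) \<open>int n = max (int K) (nrm c)\<close> by linarith
qed

lemma free_notB: "a \<notin> NF \<Longrightarrow> a \<notin> B"
  unfolding NF_def fill_def using cmp_self by blast

lemma inf_free:
  assumes "a \<notin> B" "infinite (comp_of sq_adj (-B) a)"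
  shows "a \<notin> NF"
proof
  assume "a \<in> NF"
  then obtain c where c: "c \<in> B" "a \<in> fill (cmp c)" unfolding NF_def by blast
  have "a \<notin> cmp c" using assms(1) cmp_sub[OF c(1)] by blast
  then have "finite (comp_of sq_adj (- cmp c) a)" using c(2) unfolding fill_def by auto
  moreover have "comp_of sq_adj (-B) a \<subseteq> comp_of sq_adj (- cmp c) a"
    by (rule comp_mono) (use cmp_sub[OF c(1)] in blast)
  ultimately show False using assms(2) finite_subset by blast
qed

end


definition cpt :: "site \<Rightarrow> complex" where
  "cpt z = Complex (of_int (fst z)) (of_int (snd z))"
definition sqr :: "site \<Rightarrow> complex set" where
  "sqr z = cbox (cpt z - Complex (1/2) (1/2)) (cpt z + Complex (1/2) (1/2))"
definition KK :: "site set \<Rightarrow> complex set" where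
  "KK S = (\<Union>z\<in>S. sqr z)"

lemma sqr_iff: "p \<in> sqr z \<longleftrightarrow> \<bar>Re p - of_int (fst z)\<bar> \<le> 1/2 \<and> \<bar>Im p - of_int (snd z)\<bar> \<le> 1/2"
proof -
  have "p \<in> sqr z \<longleftrightarrow> (of_int (fst z) - 1/2 \<le> Re p \<and> Re p \<le> of_int (fst z) + 1/2) \<and>
     (of_int (snd z) - 1/2 \<le> Im p \<and> Im p \<le> of_int (snd z) + 1/2)"
    unfolding sqr_def in_cbox_complex_iff cpt_def by simp
  also have "\<dots> \<longleftrightarrow> \<bar>Re p - of_int (fst z)\<bar> \<le> 1/2 \<and> \<bar>Im p - of_int (snd z)\<bar> \<le> 1/2"
    by (simp only: abs_le_iff) argo
  finally show ?thesis .
qed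

lemma KK_iff: "p \<in> KK S \<longleftrightarrow> (\<exists>z\<in>S. p \<in> sqr z)"
  unfolding KK_def by auto

lemma compact_KK: "finite S \<Longrightarrow> compact (KK S)"
  unfolding KK_def by (rule compact_UN) (auto simp: sqr_def)

lemma KK_Un: "KK (S \<union> T) = KK S \<union> KK T"
  unfolding KK_def by auto

lemma int_half:
  fixes x :: real
  assumes "\<bar>x - of_int a\<bar> \<le> 1/2" "\<bar>x - of_int b\<bar> \<le> 1/2"
  shows "\<bar>a - b\<bar> \<le> 1"
proof -
  have "of_int (a - b) \<le> (1::real)" "of_int (b - a) \<le> (1::real)" using assms by (simp_all, arith+)
  then have "a - b \<le> 1" "b - a \<le> 1" by linarith+
  then show ?thesis by arith
qed

lemma int_half_eq:
  fixes x :: real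
  assumes "\<bar>x - of_int a\<bar> \<le> 1/2" "x = of_int b"
  shows "a = b"
proof -
  have "of_int (a - b) < (1::real)" "of_int (b - a) < (1::real)" using assms by (simp_all, arith+)
  then have "a - b < 1" "b - a < 1" by linarith+
  then show ?thesis by arith
qed

lemma cpt_in_sqr: "cpt a \<in> sqr z \<longleftrightarrow> z = a"
proof
  assume "cpt a \<in> sqr z"
  then have h: "\<bar>of_int (fst a) - of_int (fst z)\<bar> \<le> (1/2::real)" "\<bar>of_int (snd a) - of_int (snd z)\<bar> \<le> (1/2::real)"
    unfolding sqr_iff cpt_def by auto
  have "fst z = fst a" by (rule int_half_eq[OF h(1)]) simp
  moreover have "snd z = snd a" by (rule int_half_eq[OF h(2)]) simp
  ultimately show "z = a" by (simp add: prod_eq_iff)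
next
  assume "z = a" then show "cpt a \<in> sqr z" unfolding sqr_iff cpt_def by simp
qed

lemma KK_disj:
  assumes "\<forall>s\<in>S. \<forall>t\<in>T. dinf s t \<ge> 2"
  shows "KK S \<inter> KK T = {}"
proof (rule ccontr)
  assume "KK S \<inter> KK T \<noteq> {}"
  then obtain p where "p \<in> KK S" "p \<in> KK T" by blast
  then obtain s t where "s \<in> S" "t \<in> T" "p \<in> sqr s" "p \<in> sqr t" unfolding KK_iff by blast
  then have "\<bar>fst s - fst t\<bar> \<le> 1" "\<bar>snd s - snd t\<bar> \<le> 1"
    unfolding sqr_iff using int_half[of "Re p" "fst s" "fst t"] int_half[of "Im p" "snd s" "snd t"] by auto
  then have "dinf s t \<le> 1" unfolding dinf_def by simp
  then show False using assms \<open>s \<in> S\<close> \<open>t \<in> T\<close> by force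
qed

lemma int_01:
  assumes "- 1/2 \<le> (of_int k :: real)" "of_int k \<le> (3/2::real)"
  shows "k = 0 \<or> k = 1"
proof -
  have "of_int k > (-1::real)" "of_int k < (2::real)" using assms by linarith+
  then have "k > -1" "k < 2" by linarith+
  then show ?thesis by arith
qed

lemma seg_x:
  assumes "fst z = fst y + 1" "snd z = snd y" "p \<in> closed_segment (cpt y) (cpt z)" "p \<in> sqr w"
  shows "w = y \<or> w = z"
proof -
  obtain u :: real where u: "0 \<le> u" "u \<le> 1" "p = (1 - u) *\<^sub>R cpt y + u *\<^sub>R cpt z"
    using assms(3) unfolding closed_segment_def by blast
  have re: "Re p = of_int (fst y) + u" and im: "Im p = of_int (snd y)"
    unfolding u(3) using assms(1,2) by (simp_all add: cpt_def algebra_simps)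
  have h1: "\<bar>of_int (fst y) + u - of_int (fst w)\<bar> \<le> 1/2" "\<bar>of_int (snd y) - of_int (snd w)\<bar> \<le> (1/2::real)"
    using assms(4) re im unfolding sqr_iff by auto
  have sw: "snd w = snd y" by (rule int_half_eq[OF h1(2)]) simp
  have "- 1/2 \<le> (of_int (fst w - fst y) :: real)" "of_int (fst w - fst y) \<le> (3/2::real)" using h1(1) u by (simp_all, arith+)
  then have "fst w - fst y = 0 \<or> fst w - fst y = 1" by (rule int_01)
  then show ?thesis using sw assms(1,2) by (auto simp: prod_eq_iff)
qed

lemma seg_y:
  assumes "fst z = fst y" "snd z = snd y + 1" "p \<in> closed_segment (cpt y) (cpt z)" "p \<in> sqr w"
  shows "w = y \<or> w = z"
proof -
  obtain u :: real where u: "0 \<le> u" "u \<le> 1" "p = (1 - u) *\<^sub>R cpt y + u *\<^sub>R cpt z"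
    using assms(3) unfolding closed_segment_def by blast
  have re: "Re p = of_int (fst y)" and im: "Im p = of_int (snd y) + u"
    unfolding u(3) using assms(1,2) by (simp_all add: cpt_def algebra_simps)
  have h1: "\<bar>of_int (snd y) + u - of_int (snd w)\<bar> \<le> 1/2" "\<bar>of_int (fst y) - of_int (fst w)\<bar> \<le> (1/2::real)"
    using assms(4) re im unfolding sqr_iff by auto
  have sw: "fst w = fst y" by (rule int_half_eq[OF h1(2)]) simp
  have "- 1/2 \<le> (of_int (snd w - snd y) :: real)" "of_int (snd w - snd y) \<le> (3/2::real)" using h1(1) u by (simp_all, arith+)
  then have "snd w - snd y = 0 \<or> snd w - snd y = 1" by (rule int_01)
  then show ?thesis using sw assms(1,2) by (auto simp: prod_eq_iff)
qed

lemma seg_any: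
  assumes "sq_adj y z" "p \<in> closed_segment (cpt y) (cpt z)" "p \<in> sqr w"
  shows "w = y \<or> w = z"
proof -
  have "(fst z = fst y + 1 \<and> snd z = snd y) \<or> (fst y = fst z + 1 \<and> snd y = snd z) \<or>
        (fst z = fst y \<and> snd z = snd y + 1) \<or> (fst y = fst z \<and> snd y = snd z + 1)"
    using assms(1) unfolding sq_adj_def by arith
  moreover have "p \<in> closed_segment (cpt z) (cpt y)" using assms(2) by (simp add: closed_segment_commute)
  ultimately show ?thesis using seg_x seg_y assms(2,3) by blast
qed

lemma seg_avoid:
  assumes "sq_adj y z" "y \<notin> S" "z \<notin> S"
  shows "closed_segment (cpt y) (cpt z) \<subseteq> - KK S"
proof
  fix p assume p: "p \<in> closed_segment (cpt y) (cpt z)"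
  show "p \<in> - KK S"
  proof
    assume "p \<in> KK S"
    then obtain w where "w \<in> S" "p \<in> sqr w" unfolding KK_iff by blast
    then show False using seg_any[OF assms(1) p] assms(2,3) by blast
  qed
qed

lemma cc_of_path:
  assumes "(adj_in sq_adj (-S))\<^sup>*\<^sup>* a b" "a \<notin> S"
  shows "connected_component (- KK S) (cpt a) (cpt b)"
  using assms(1)
proof (induction rule: rtranclp_induct)
  case base
  have "cpt a \<notin> KK S"
  proof
    assume "cpt a \<in> KK S"
    then obtain w where "w \<in> S" "cpt a \<in> sqr w" unfolding KK_iff by blast
    then show False using assms(2) cpt_in_sqr[THEN iffD1] by blast
  qed
  then have "cpt a \<in> - KK S" by simp
  then show ?case by (rule connected_component_refl)
next
  case (step y z)
  have yz: "y \<notin> S" "z \<notin> S" "sq_adj y z" using step(2) unfolding adj_in_def by auto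
  have 1: "connected (closed_segment (cpt y) (cpt z))" by (rule connected_segment)
  have 2: "closed_segment (cpt y) (cpt z) \<subseteq> - KK S" by (rule seg_avoid[OF yz(3,1,2)])
  have 3: "cpt y \<in> closed_segment (cpt y) (cpt z)" "cpt z \<in> closed_segment (cpt y) (cpt z)"
    by (rule ends_in_segment)+
  have "connected_component (- KK S) (cpt y) (cpt z)"
    unfolding connected_component_def using 1 2 3 by blast
  then show ?case using step(3) connected_component_trans by blast
qed

lemma path_of_cc:
  assumes "finite S" "connected_component (- KK S) (cpt a) (cpt b)"
  shows "(adj_in sq_adj (-S))\<^sup>*\<^sup>* a b"
proof -
  have "open (- KK S)" using compact_KK[OF assms(1)] by (simp add: compact_imp_closed open_Compl)
  then have "path_component (- KK S) (cpt a) (cpt b)" using assms(2) open_path_connected_component[of "- KK S"] by simp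
  then obtain g where g: "path g" "path_image g \<subseteq> - KK S" "pathstart g = cpt a" "pathfinish g = cpt b"
    unfolding path_component_def by blast
  let ?P = "path_image g"
  have conP: "connected ?P" using g(1) by (rule connected_path_image)
  have "bounded ?P" using g(1) by (simp add: bounded_path_image)
  then obtain r where r: "\<And>x. x \<in> ?P \<Longrightarrow> norm x \<le> r" unfolding bounded_iff by blast
  define R where "R = {z. nrm z \<le> \<lceil>r\<rceil> + 1}"
  have finR: "finite R" unfolding R_def by (rule finite_box)
  define D where "D = comp_of sq_adj (-S) a"
  define V where "V = KK (D \<inter> R)"
  define W where "W = KK (R - D)"
  have clV: "closed V" unfolding V_def using finR by (simp add: compact_KK compact_imp_closed)
  have clW: "closed W" unfolding W_def using finR by (simp add: compact_KK compact_imp_closed)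
  define rnd where "rnd p = (round (Re p), round (Im p))" for p :: complex
  have rnd_sqr: "p \<in> sqr (rnd p)" for p
  proof -
    have "\<bar>Re p - of_int (round (Re p))\<bar> \<le> 1/2" using of_int_round_abs_le[of "Re p"] by (simp add: abs_minus_commute)
    moreover have "\<bar>Im p - of_int (round (Im p))\<bar> \<le> 1/2" using of_int_round_abs_le[of "Im p"] by (simp add: abs_minus_commute)
    ultimately show ?thesis unfolding sqr_iff rnd_def by simp
  qed
  have rnd_R: "rnd p \<in> R" if "p \<in> ?P" for p
  proof -
    have "\<bar>Re p\<bar> \<le> norm p" "\<bar>Im p\<bar> \<le> norm p" by (rule abs_Re_le_cmod, rule abs_Im_le_cmod)
    then have "\<bar>Re p\<bar> \<le> r" "\<bar>Im p\<bar> \<le> r" using r[OF that] by linarith+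
    moreover have "\<bar>of_int (round (Re p)) - Re p\<bar> \<le> 1/2" "\<bar>of_int (round (Im p)) - Im p\<bar> \<le> 1/2"
      by (rule of_int_round_abs_le)+
    ultimately have a1: "\<bar>real_of_int (round (Re p))\<bar> \<le> r + 1/2" "\<bar>real_of_int (round (Im p))\<bar> \<le> r + 1/2" by arith+
    have "r \<le> of_int \<lceil>r\<rceil>" by (rule le_of_int_ceiling)
    then have "real_of_int \<bar>round (Re p)\<bar> \<le> real_of_int (\<lceil>r\<rceil> + 1)" "real_of_int \<bar>round (Im p)\<bar> \<le> real_of_int (\<lceil>r\<rceil> + 1)"
      using a1 unfolding of_int_abs of_int_add of_int_1 by linarith+
    then have "\<bar>round (Re p)\<bar> \<le> \<lceil>r\<rceil> + 1" "\<bar>round (Im p)\<bar> \<le> \<lceil>r\<rceil> + 1" by (simp_all only: of_int_le_iff)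
    then show ?thesis unfolding R_def rnd_def nrm_def by simp
  qed
  have cover: "?P \<subseteq> V \<union> W"
  proof
    fix p assume "p \<in> ?P"
    then have "rnd p \<in> R" by (rule rnd_R)
    then show "p \<in> V \<union> W" using rnd_sqr[of p] unfolding V_def W_def by (cases "rnd p \<in> D") (auto simp: KK_iff)
  qed
  have disj: "V \<inter> W \<inter> ?P = {}"
  proof (rule ccontr)
    assume "V \<inter> W \<inter> ?P \<noteq> {}"
    then obtain p where p: "p \<in> ?P" and pV: "p \<in> V" and pW: "p \<in> W" by blast
    obtain c where c: "c \<in> D" "p \<in> sqr c" using pV unfolding V_def KK_iff by blast
    obtain c' where c': "c' \<notin> D" "p \<in> sqr c'" using pW unfolding W_def KK_iff by blast
    have pK: "p \<notin> KK S" using p g(2) by blast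
    have cS: "c \<notin> S" using c pK unfolding KK_iff by blast
    define r0 where "r0 = (fst c', snd c)"
    have "p \<in> sqr r0" using c(2) c'(2) unfolding sqr_iff r0_def by simp
    then have r0S: "r0 \<notin> S" using pK unfolding KK_iff by blast
    have c'S: "c' \<notin> S" using c' pK unfolding KK_iff by blast
    have dx: "\<bar>fst c - fst c'\<bar> \<le> 1" "\<bar>snd c - snd c'\<bar> \<le> 1"
      using c(2) c'(2) unfolding sqr_iff using int_half[of "Re p" "fst c" "fst c'"] int_half[of "Im p" "snd c" "snd c'"] by auto
    have "r0 \<in> D"
    proof (cases "fst c' = fst c")
      case True then have "r0 = c" unfolding r0_def by (simp add: prod_eq_iff)
      then show ?thesis using c by simp
    next
      case False
      then have "sq_adj c r0" using dx unfolding sq_adj_def r0_def by auto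
      then show ?thesis using comp_step[of c sq_adj "-S" a r0] c(1) cS r0S unfolding D_def by blast
    qed
    moreover have "c' \<in> D"
    proof (cases "snd c' = snd c")
      case True then have "r0 = c'" unfolding r0_def by (simp add: prod_eq_iff)
      then show ?thesis using \<open>r0 \<in> D\<close> by simp
    next
      case False
      then have "sq_adj r0 c'" using dx unfolding sq_adj_def r0_def by auto
      then show ?thesis using comp_step[of r0 sq_adj "-S" a c'] \<open>r0 \<in> D\<close> r0S c'S unfolding D_def by blast
    qed
    ultimately show False using c' by blast
  qed
  have aP: "cpt a \<in> ?P" using pathstart_in_path_image[of g] g(3) by simp
  have bP: "cpt b \<in> ?P" using pathfinish_in_path_image[of g] g(4) by simp
  have "rnd (cpt a) = a" unfolding rnd_def cpt_def by simp
  then have "a \<in> R" using rnd_R[OF aP] by simp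
  moreover have "a \<in> D" unfolding D_def by (rule comp_self)
  moreover have "cpt a \<in> sqr a" using cpt_in_sqr by simp
  ultimately have aV: "cpt a \<in> V" unfolding V_def KK_iff by blast
  have nc: "\<not> (\<exists>A Bs. closed A \<and> closed Bs \<and> ?P \<subseteq> A \<union> Bs \<and> A \<inter> Bs \<inter> ?P = {} \<and> A \<inter> ?P \<noteq> {} \<and> Bs \<inter> ?P \<noteq> {})"
    by (rule conP[unfolded connected_closed])
  have "W \<inter> ?P = {}"
  proof (rule ccontr)
    assume wp: "W \<inter> ?P \<noteq> {}"
    have "V \<inter> ?P \<noteq> {}" using aV aP by blast
    then have "closed V \<and> closed W \<and> ?P \<subseteq> V \<union> W \<and> V \<inter> W \<inter> ?P = {} \<and> V \<inter> ?P \<noteq> {} \<and> W \<inter> ?P \<noteq> {}"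
      using clV clW cover disj wp by simp
    then show False using nc by blast
  qed
  then have "cpt b \<in> V" using bP cover by blast
  then obtain c where "c \<in> D" "cpt b \<in> sqr c" unfolding V_def KK_iff by blast
  then have "b \<in> D" using cpt_in_sqr[THEN iffD1] by blast
  then show ?thesis unfolding D_def by (simp add: comp_mem)
qed

lemma DJ:
  assumes "finite S" "finite T" "\<forall>s\<in>S. \<forall>t\<in>T. dinf s t \<ge> 2" "a \<notin> S" "a \<notin> T"
    "(adj_in sq_adj (-S))\<^sup>*\<^sup>* a b" "(adj_in sq_adj (-T))\<^sup>*\<^sup>* a b"
  shows "(adj_in sq_adj (-(S \<union> T)))\<^sup>*\<^sup>* a b"
proof -
  have "connected_component (- (KK S \<union> KK T)) (cpt a) (cpt b)"
  proof (rule Janiszewski_weak)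
    show "compact (KK S)" "compact (KK T)" using assms(1,2) by (simp_all add: compact_KK)
    show "connected (KK S \<inter> KK T)" using KK_disj[OF assms(3)] by simp
    show "connected_component (- KK S) (cpt a) (cpt b)" using cc_of_path assms(4,6) by blast
    show "connected_component (- KK T) (cpt a) (cpt b)" using cc_of_path assms(5,7) by blast
  qed
  then have "connected_component (- KK (S \<union> T)) (cpt a) (cpt b)" by (simp add: KK_Un)
  then show ?thesis using path_of_cc assms(1,2) by blast
qed


lemma sq_nrm: "sq_adj u v \<Longrightarrow> \<bar>nrm u - nrm v\<bar> \<le> 1"
  unfolding sq_adj_def nrm_def by arith

lemma dinf_box: "dinf s t \<le> 1 \<Longrightarrow> s \<noteq> t \<Longrightarrow> box_adj s t"
  unfolding dinf_def box_adj_def by (auto simp: prod_eq_iff)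

lemma nrm_dinf: "nrm t \<le> nrm s + dinf s t"
  unfolding nrm_def dinf_def by arith

lemma dinf_sym: "dinf s t = dinf t s"
  unfolding dinf_def by (simp add: abs_minus_commute)

lemma trap:
  assumes "(adj_in sq_adj X)\<^sup>*\<^sup>* a z" "\<forall>x\<in>X. nrm x \<noteq> M" "nrm a < M"
  shows "(adj_in sq_adj (X \<inter> {x. nrm x < M}))\<^sup>*\<^sup>* a z"
  using assms(1)
proof (induction rule: rtranclp_induct)
  case base then show ?case by simp
next
  case (step y z)
  have "y = a \<or> y \<in> X \<inter> {x. nrm x < M}" using rt_end[OF step(3)] .
  then have ny: "nrm y < M" using assms(3) by auto
  have yz: "y \<in> X" "z \<in> X" "sq_adj y z" using step(2) unfolding adj_in_def by auto
  have "\<bar>nrm y - nrm z\<bar> \<le> 1" using sq_nrm[OF yz(3)] .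
  moreover have "nrm z \<noteq> M" using assms(2) yz(2) by blast
  ultimately have "nrm z < M" using ny by arith
  then have "adj_in sq_adj (X \<inter> {x. nrm x < M}) y z" using yz ny unfolding adj_in_def by auto
  then show ?case using rtranclp.rtrancl_into_rtrancl[OF step(3)] by blast
qed

lemma rt_mono_set:
  assumes "(adj_in adj X)\<^sup>*\<^sup>* a z" "X \<subseteq> Y"
  shows "(adj_in adj Y)\<^sup>*\<^sup>* a z"
  using comp_mono[OF assms(2), of adj a] assms(1) by (auto simp: comp_mem)

lemma finite_bound: "finite A \<Longrightarrow> \<exists>N. \<forall>z\<in>A. nrm z \<le> N"
  by (rule exI[of _ "Max (insert 0 (nrm ` A))"]) (auto intro: Max_ge)

context comps
begin

lemma free_conn:
  assumes G: "Good K" and a: "a \<notin> NF" and b: "b \<notin> NF"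
  shows "(adj_in sq_adj (-B))\<^sup>*\<^sup>* a b"
proof -
  have aB: "a \<notin> B" and bB: "b \<notin> B" using a b free_notB by auto
  define N where "N = max (nrm a) (nrm b)"
  define Cs where "Cs = cmp ` (B \<inter> {z. nrm z \<le> N})"
  have finCs: "finite Cs" unfolding Cs_def using finite_box[of N] by auto
  have Cs_fin: "finite C" if "C \<in> Cs" for C using that good_fin[OF G] unfolding Cs_def by auto
  define S where "S = \<Union>Cs"
  have finS: "finite S" unfolding S_def using finCs Cs_fin by auto
  obtain NS where NS: "\<forall>z\<in>S. nrm z \<le> NS" using finite_bound[OF finS] by blast
  define M where "M = max N NS + 2"
  define T0 where "T0 = ((B - S) \<inter> {z. nrm z \<le> M}) \<union> {z. nrm z = M}"
  have finT0: "finite T0" unfolding T0_def by (rule finite_subset[OF _ finite_box[of M]]) auto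
  have aN: "nrm a \<le> N" "nrm b \<le> N" unfolding N_def by auto
  have SB: "S \<subseteq> B" unfolding S_def Cs_def using cmp_sub by auto
  have BS: "z \<in> S" if "z \<in> B" "nrm z \<le> N" for z
    using that cmp_self unfolding S_def Cs_def by blast
  have key: "(adj_in sq_adj (-(\<Union>F \<union> T0)))\<^sup>*\<^sup>* a b" if "finite F" "F \<subseteq> Cs" for F
    using that
  proof (induction F rule: finite_induct)
    case empty
    have "(adj_in sq_adj {z. nrm z \<le> N})\<^sup>*\<^sup>* a b" using box_conn aN by blast
    moreover have "{z. nrm z \<le> N} \<subseteq> - (\<Union>{} \<union> T0)"
      unfolding T0_def M_def using BS by force
    ultimately show ?case by (rule rt_mono_set)
  next
    case (insert C F)
    obtain c where c: "c \<in> B" "nrm c \<le> N" "C = cmp c" using insert(4) unfolding Cs_def by blast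
    have CS: "C \<subseteq> S" using insert(4) unfolding S_def by blast
    have finC: "finite C" using Cs_fin insert(4) by blast
    have finT: "finite (\<Union>F \<union> T0)" using insert(1,4) Cs_fin finT0 by auto
    have sep: "\<forall>s\<in>C. \<forall>t\<in>\<Union>F \<union> T0. dinf s t \<ge> 2"
    proof (intro ballI)
      fix s t assume s: "s \<in> C" and t: "t \<in> \<Union>F \<union> T0"
      show "dinf s t \<ge> 2"
      proof (rule ccontr)
        assume "\<not> dinf s t \<ge> 2"
        then have d1: "dinf s t \<le> 1" by simp
        have sB: "s \<in> B" using s CS SB by blast
        have closeC: "t \<in> C" if "t \<in> B" 
        proof (cases "s = t")
          case True then show ?thesis using s by simp
        next
          case False
          then have "box_adj s t" using d1 dinf_box by blast
          then show ?thesis using cmp_closed[of s c t] s c that by blast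
        qed
        consider (F) "t \<in> \<Union>F" | (R) "t \<in> (B - S) \<inter> {z. nrm z \<le> M}" | (M) "nrm t = M"
          using t unfolding T0_def by blast
        then show False
        proof cases
          case F
          then obtain C' where C': "C' \<in> F" "t \<in> C'" by blast
          obtain c' where c': "c' \<in> B" "C' = cmp c'" using C' insert(4) unfolding Cs_def by blast
          have "t \<in> B" using C' c' cmp_sub by blast
          then have "t \<in> C" by (rule closeC)
          then have "C = C'" using C'(2) c c' cmp_disj by blast
          then show False using C'(1) insert(2) by blast
        next
          case R
          then have "t \<in> C" using closeC by blast
          then show False using R CS by blast
        next
          case M
          have "nrm s \<le> M - 2" using NS s CS unfolding M_def by force
          then show False using M nrm_dinf[of t s] d1 by linarith
        qed
      qed
    qed
    have aC: "a \<notin> C" using aB CS SB by blast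
    have aT: "a \<notin> \<Union>F \<union> T0"
    proof -
      have "a \<notin> \<Union>F" using aB insert(4) Cs_fin SB unfolding S_def by blast
      moreover have "a \<notin> T0" using aB aN unfolding T0_def M_def by auto
      ultimately show ?thesis by blast
    qed
    have "a \<notin> fill C" "b \<notin> fill C" using a b c unfolding NF_def by auto
    then have "a \<notin> C" "b \<notin> C" "infinite (comp_of sq_adj (-C) a)" "infinite (comp_of sq_adj (-C) b)"
      unfolding fill_def by auto
    then have "b \<in> comp_of sq_adj (-C) a" using unique_inf[OF finC] by blast
    then have pC: "(adj_in sq_adj (-C))\<^sup>*\<^sup>* a b" by (simp add: comp_mem)
    have "(adj_in sq_adj (-(C \<union> (\<Union>F \<union> T0))))\<^sup>*\<^sup>* a b"
      by (rule DJ[OF finC finT sep aC aT pC insert(3)]) (use insert(4) in blast)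
    moreover have "C \<union> (\<Union>F \<union> T0) = \<Union>(insert C F) \<union> T0" by auto
    ultimately show ?case by simp
  qed
  have kk: "(adj_in sq_adj (-(S \<union> T0)))\<^sup>*\<^sup>* a b" using key[OF finCs] unfolding S_def by simp
  have t1: "\<forall>x\<in>-(S \<union> T0). nrm x \<noteq> M" unfolding T0_def by auto
  have t2: "nrm a < M" using aN(1) unfolding M_def by linarith
  have "(adj_in sq_adj (-(S \<union> T0) \<inter> {x. nrm x < M}))\<^sup>*\<^sup>* a b" using trap[OF kk t1 t2] .
  moreover have "-(S \<union> T0) \<inter> {x. nrm x < M} \<subseteq> -B" unfolding T0_def by auto
  ultimately show ?thesis by (rule rt_mono_set)
qed

lemma free_exists_far:
  assumes G: "Good K"
  shows "\<exists>a. a \<notin> NF \<and> nrm a > N"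
proof -
  define L where "L = max 1 (max (2 * int K) (N + 1))"
  have L1: "L \<ge> 1" "L \<ge> 2 * int K" "L \<ge> N + 1" unfolding L_def by auto
  obtain x where x: "L \<le> x" "x \<le> 2 * L" "(x, 0) \<notin> NF"
    using segment_free[OF G L1(1) L1(2)] by blast
  have "nrm (x, 0) > N" unfolding nrm_def using x(1) L1(3) by simp
  then show ?thesis using x(3) by blast
qed

lemma main_det:
  assumes G: "Good K"
  shows "(\<exists>!I. I \<in> components_of sq_adj (- B) \<and> infinite I) \<and>
           (\<forall>I. I \<in> components_of sq_adj (- B) \<and> infinite I \<longrightarrow>
                (\<forall>C \<in> components_of box_adj (- I). finite C))"
proof -
  obtain a0 where a0: "a0 \<notin> NF" using free_exists_far[OF G] by blast
  have a0B: "a0 \<notin> B" using a0 free_notB by blast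
  define I where "I = comp_of sq_adj (-B) a0"
  have freeI: "b \<in> I" if "b \<notin> NF" for b
    using free_conn[OF G a0 that] unfolding I_def by (simp add: comp_mem)
  have infI: "infinite I"
  proof
    assume "finite I"
    then obtain N where N: "\<forall>z\<in>I. nrm z \<le> N" using finite_bound by blast
    obtain b where b: "b \<notin> NF" "nrm b > N" using free_exists_far[OF G] by blast
    have "b \<in> I" using b(1) by (rule freeI)
    then have "nrm b \<le> N" using N by blast
    then show False using b(2) by linarith
  qed
  have Icomp: "I \<in> components_of sq_adj (-B)" unfolding components_of_def I_def using a0B by blast
  have uniq: "J = I" if J: "J \<in> components_of sq_adj (-B)" "infinite J" for J
  proof -
    obtain j where j: "j \<in> -B" "J = comp_of sq_adj (-B) j" using J(1) unfolding components_of_def by blast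
    have "j \<notin> NF" using inf_free j J(2) by blast
    then have "j \<in> I" by (rule freeI)
    then have "comp_of sq_adj (-B) j = I" unfolding I_def by (rule sq_comp_eq)
    then show ?thesis using j by simp
  qed
  have part2: "finite C" if C: "C \<in> components_of box_adj (- I)" for C
  proof (rule ccontr)
    assume infC: "infinite C"
    obtain d0 where d0: "d0 \<in> -I" "C = comp_of box_adj (-I) d0" using C unfolding components_of_def by blast
    obtain d where d: "d \<in> C" "dinf d d0 > max (2 * int K) (nrm d0)" using infinite_far_from[OF infC] by blast
    have path: "(adj_in box_adj (-I))\<^sup>*\<^sup>* d0 d" using d(1) d0(2) by (simp add: comp_mem)
    have sub: "-I \<subseteq> NF" using freeI by blast
    obtain c where c: "c \<in> B" "d0 \<in> fill (cmp c)" "d \<in> fill (cmp c)"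
      using walk_fill[OF path d0(1) sub] by blast
    have "nrm d0 \<ge> 0" unfolding nrm_def by simp
    then show False using bb[OF G c] d(2) dinf_sym[of d0 d] by linarith
  qed
  show ?thesis
  proof
    show "\<exists>!I. I \<in> components_of sq_adj (- B) \<and> infinite I" using Icomp infI uniq by blast
    show "\<forall>I. I \<in> components_of sq_adj (- B) \<and> infinite I \<longrightarrow> (\<forall>C \<in> components_of box_adj (- I). finite C)"
      using uniq part2 by blast
  qed
qed

end


fun walks :: "site \<Rightarrow> nat \<Rightarrow> site list set" where
  "walks z 0 = {[z]}"
| "walks z (Suc n) = (\<Union>w\<in>{w. box_adj z w}. (\<lambda>xs. z # xs) ` walks w n)"

lemma nbrs_sub: "{w. box_adj z w} \<subseteq> ({fst z - 1..fst z + 1} \<times> {snd z - 1..snd z + 1}) - {z}"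
  unfolding box_adj_def by (auto simp: abs_le_iff)

lemma nbrs_fin: "finite {w. box_adj z w}"
  by (rule finite_subset[OF nbrs_sub]) auto

lemma nbrs_card: "card {w. box_adj z w} \<le> 8"
proof -
  have "card {w. box_adj z w} \<le> card (({fst z - 1..fst z + 1} \<times> {snd z - 1..snd z + 1}) - {z})"
    by (rule card_mono[OF _ nbrs_sub]) auto
  also have "\<dots> = 8"
  proof -
    have "z \<in> {fst z - 1..fst z + 1} \<times> {snd z - 1..snd z + 1}" by (cases z) auto
    then show ?thesis by (simp add: card_cartesian_product)
  qed
  finally show ?thesis .
qed

lemma walks_fin_card: "finite (walks z n) \<and> card (walks z n) \<le> 8 ^ n"
proof (induction n arbitrary: z)
  case 0 then show ?case by simp
next
  case (Suc n)
  let ?N = "{w. box_adj z w}"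
  have fin: "finite (walks z (Suc n))" using Suc nbrs_fin by simp
  have "card (walks z (Suc n)) \<le> (\<Sum>w\<in>?N. card ((\<lambda>xs. z # xs) ` walks w n))"
    unfolding walks.simps by (rule card_UN_le[OF nbrs_fin])
  also have "\<dots> \<le> (\<Sum>w\<in>?N. 8 ^ n)"
    by (rule sum_mono) (meson Suc card_image_le order_trans)
  also have "\<dots> = card ?N * 8 ^ n" by simp
  also have "\<dots> \<le> 8 * 8 ^ n" using nbrs_card by simp
  finally show ?case using fin by simp
qed

lemma walks_char:
  "length xs = Suc n \<Longrightarrow> hd xs = z \<Longrightarrow> successively box_adj xs \<Longrightarrow> xs \<in> walks z n"
proof (induction n arbitrary: z xs)
  case 0
  then obtain x where "xs = [x]" by (cases xs) auto
  then show ?case using 0 by simp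
next
  case (Suc n)
  then obtain w ys where xs: "xs = z # w # ys" by (cases xs; cases "tl xs") auto
  have "box_adj z w" "successively box_adj (w # ys)" using Suc(4) xs by auto
  moreover have "w # ys \<in> walks w n" using Suc xs \<open>successively box_adj (w # ys)\<close> by simp
  ultimately have "xs \<in> (\<Union>w\<in>{w. box_adj z w}. (\<lambda>xs. z # xs) ` walks w n)" using xs by blast
  then show ?case by simp
qed

lemma walks_len: "xs \<in> walks z n \<Longrightarrow> length xs = Suc n"
  by (induction n arbitrary: z xs) auto

lemma swalk:
  assumes "(adj_in box_adj S)\<^sup>*\<^sup>* v w" "v \<in> S"
  shows "\<exists>xs. xs \<noteq> [] \<and> hd xs = v \<and> last xs = w \<and> distinct xs \<and> successively box_adj xs \<and> set xs \<subseteq> S"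
  using assms(1)
proof (induction rule: rtranclp_induct)
  case base
  show ?case by (rule exI[of _ "[v]"]) (use assms(2) in simp)
next
  case (step y z)
  obtain xs where xs: "xs \<noteq> []" "hd xs = v" "last xs = y" "distinct xs" "successively box_adj xs" "set xs \<subseteq> S"
    using step(3) by blast
  have yz: "z \<in> S" "box_adj y z" using step(2) unfolding adj_in_def by auto
  show ?case
  proof (cases "z \<in> set xs")
    case True
    then obtain ys zs where sp: "xs = ys @ z # zs" by (meson split_list)
    let ?n = "ys @ [z]"
    have "?n \<noteq> []" by simp
    moreover have "hd ?n = v"
    proof (cases ys)
      case Nil then show ?thesis using xs(2) sp by simp
    next
      case (Cons a l) then show ?thesis using xs(2) sp by simp
    qed
    moreover have "last ?n = z" by simp
    moreover have "distinct ?n" using xs(4) sp by simp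
    moreover have "successively box_adj ?n"
    proof -
      have "xs = ?n @ zs" using sp by simp
      then show ?thesis using xs(5) successively_append_iff by metis
    qed
    moreover have "set ?n \<subseteq> S" using xs(6) sp by auto
    ultimately show ?thesis by blast
  next
    case False
    let ?n = "xs @ [z]"
    have "successively box_adj ?n" using xs(1,3,5) yz(2) by (simp add: successively_append_iff)
    moreover have "hd ?n = v" using xs(1,2) by simp
    moreover have "distinct ?n" using xs(4) False by simp
    moreover have "set ?n \<subseteq> S" using xs(6) yz(1) by simp
    moreover have "?n \<noteq> []" "last ?n = z" by simp_all
    ultimately show ?thesis by blast
  qed
qed

lemma dinf_tri: "dinf a c \<le> dinf a b + dinf b c"
  unfolding dinf_def by arith

lemma walk_dist:
  "successively box_adj xs \<Longrightarrow> xs \<noteq> [] \<Longrightarrow> dinf (last xs) (hd xs) \<le> int (length xs) - 1"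
proof (induction xs)
  case Nil then show ?case by simp
next
  case (Cons x ys)
  show ?case
  proof (cases ys)
    case Nil then show ?thesis by (simp add: dinf_def)
  next
    case (Cons y zs)
    have b: "box_adj x y" "successively box_adj ys" using Cons.prems(1) Cons by auto
    have ih: "dinf (last ys) (hd ys) \<le> int (length ys) - 1" using Cons.IH b(2) Cons by simp
    have "dinf y x = 1" using b(1) unfolding box_adj_def dinf_def by (simp add: abs_minus_commute)
    moreover have "dinf (last ys) x \<le> dinf (last ys) y + dinf y x" by (rule dinf_tri)
    ultimately show ?thesis using ih Cons by simp
  qed
qed

lemma poly_bound: "(8 * n + 1) ^ 2 \<le> 100 * (2::nat) ^ n"
proof (induction n)
  case 0 then show ?case by simp
next
  case (Suc n)
  show ?case
  proof (cases "n < 3")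
    case True
    then have "n = 0 \<or> n = 1 \<or> n = 2" by auto
    then show ?thesis by auto
  next
    case False
    have h1: "3 * (n * 64) \<le> n * (n * 64)" using False by (intro mult_right_mono) auto
    have h: "79 + n * 112 \<le> n * (n * 64)" using h1 False by linarith
    then have "(8 * Suc n + 1) ^ 2 \<le> 2 * (8 * n + 1) ^ 2" by (simp add: power2_eq_square algebra_simps)
    also have "\<dots> \<le> 2 * (100 * 2 ^ n)" using Suc by simp
    finally show ?thesis by simp
  qed
qed


lemma box_eq: "m \<ge> 0 \<Longrightarrow> {z::site. nrm z \<le> m} = {-m..m} \<times> {-m..m}"
  unfolding nrm_def by (auto simp: abs_le_iff)

lemma box_card: "card {z::site. nrm z \<le> 4 * int n} = (8 * n + 1) ^ 2"
proof -
  have "card {z::site. nrm z \<le> 4 * int n} = card ({-(4 * int n)..4 * int n} \<times> {-(4 * int n)..4 * int n})"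
    by (subst box_eq) auto
  also have "\<dots> = nat (8 * int n + 1) * nat (8 * int n + 1)" by (simp add: card_cartesian_product)
  also have "\<dots> = (8 * n + 1) ^ 2"
  proof -
    have "8 * int n + 1 = int (8 * n + 1)" by simp
    then have "nat (8 * int n + 1) = 8 * n + 1" by (simp only: nat_int)
    then show ?thesis by (simp add: power2_eq_square)
  qed
  finally show ?thesis .
qed

lemma succ_take: "successively P xs \<Longrightarrow> successively P (take k xs)"
proof (induction xs arbitrary: k)
  case Nil then show ?case by simp
next
  case (Cons x ys)
  show ?case
  proof (cases k)
    case 0 then show ?thesis by simp
  next
    case (Suc k')
    have "successively P ys" using Cons.prems by (cases ys) auto
    then have ih: "successively P (take k' ys)" by (rule Cons.IH)
    show ?thesis
    proof (cases "take k' ys = []")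
      case True
      have "take k (x # ys) = [x]" using Suc True by simp
      then show ?thesis by simp
    next
      case False
      then have ne: "ys \<noteq> []" "k' > 0" by auto
      then have "hd (take k' ys) = hd ys" by simp
      moreover have "P x (hd ys)" using Cons.prems ne(1) by (simp add: successively_Cons)
      ultimately show ?thesis using Suc ih False by (simp add: successively_Cons)
    qed
  qed
qed

locale rsetting = prob_space M for M :: "'a measure" +
  fixes B :: "'a \<Rightarrow> site set" and eps :: real
  assumes meas: "\<And>z. {\<omega> \<in> space M. z \<in> B \<omega>} \<in> sets M"
    and rare: "rare M B eps" and small: "eps < 1/21"
begin

lemma eps0: "eps \<ge> 0" using rare unfolding rare_def by simp

definition EW :: "site list \<Rightarrow> 'a set" where "EW xs = {\<omega> \<in> space M. set xs \<subseteq> B \<omega>}"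

lemma EW_meas: "EW xs \<in> sets M"
proof (induction xs)
  case Nil
  have "EW [] = space M" unfolding EW_def by auto
  then show ?case by simp
next
  case (Cons x xs)
  have "EW (x # xs) = {\<omega> \<in> space M. x \<in> B \<omega>} \<inter> EW xs" unfolding EW_def by auto
  then show ?case using meas Cons by auto
qed

lemma EW_bound: "measure M (EW xs) \<le> eps ^ card (set xs)"
  using rare unfolding rare_def EW_def by simp

definition Wd :: "site \<Rightarrow> nat \<Rightarrow> site list set" where "Wd z n = {xs \<in> walks z n. distinct xs}"
definition Ev :: "site \<Rightarrow> nat \<Rightarrow> 'a set" where "Ev z n = (\<Union>xs\<in>Wd z n. EW xs)"
definition Vn :: "nat \<Rightarrow> 'a set" where "Vn n = (\<Union>z\<in>{z. nrm z \<le> 4 * int n}. Ev z n)"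

lemma Wd_fin: "finite (Wd z n)" and Wd_card: "card (Wd z n) \<le> 8 ^ n"
proof -
  have "Wd z n \<subseteq> walks z n" unfolding Wd_def by auto
  then show "finite (Wd z n)" "card (Wd z n) \<le> 8 ^ n"
    using walks_fin_card[of z n] by (auto intro: finite_subset card_mono order_trans)
qed

lemma Ev_meas: "Ev z n \<in> sets M"
  unfolding Ev_def using Wd_fin EW_meas by (intro sets.finite_UN) auto

lemma Vn_meas: "Vn n \<in> sets M"
  unfolding Vn_def using finite_box Ev_meas by (intro sets.finite_UN) auto

lemma Ev_bound: "measure M (Ev z n) \<le> 8 ^ n * eps ^ Suc n"
proof -
  have "measure M (Ev z n) \<le> (\<Sum>xs\<in>Wd z n. measure M (EW xs))"
    unfolding Ev_def by (rule measure_UNION_le[OF Wd_fin]) (rule EW_meas)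
  also have "\<dots> \<le> (\<Sum>xs\<in>Wd z n. eps ^ Suc n)"
  proof (rule sum_mono)
    fix xs assume "xs \<in> Wd z n"
    then have h: "xs \<in> walks z n" "distinct xs" unfolding Wd_def by auto
    have "card (set xs) = length xs" using h(2) by (rule distinct_card)
    also have "\<dots> = Suc n" using h(1) by (rule walks_len)
    finally have "card (set xs) = Suc n" .
    then show "measure M (EW xs) \<le> eps ^ Suc n" using EW_bound[of xs] by simp
  qed
  also have "\<dots> = real (card (Wd z n)) * eps ^ Suc n" by simp
  also have "\<dots> \<le> 8 ^ n * eps ^ Suc n"
  proof (rule mult_right_mono)
    have "real (card (Wd z n)) \<le> real (8 ^ n)" using Wd_card[of z n] by (simp only: of_nat_le_iff)
    then show "real (card (Wd z n)) \<le> 8 ^ n" by simp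
    show "0 \<le> eps ^ Suc n" using eps0 by simp
  qed
  finally show ?thesis .
qed

lemma Vn_bound: "measure M (Vn n) \<le> 100 * eps * (16 * eps) ^ n"
proof -
  have "measure M (Vn n) \<le> (\<Sum>z\<in>{z. nrm z \<le> 4 * int n}. measure M (Ev z n))"
    unfolding Vn_def by (rule measure_UNION_le[OF finite_box]) (rule Ev_meas)
  also have "\<dots> \<le> (\<Sum>z\<in>{z. nrm z \<le> 4 * int n}. 8 ^ n * eps ^ Suc n)"
    by (rule sum_mono) (rule Ev_bound)
  also have "\<dots> = real ((8 * n + 1) ^ 2) * (8 ^ n * eps ^ Suc n)" using box_card[of n] by simp
  also have "\<dots> \<le> real (100 * 2 ^ n) * (8 ^ n * eps ^ Suc n)"
  proof (rule mult_right_mono)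
    show "real ((8 * n + 1) ^ 2) \<le> real (100 * 2 ^ n)" using poly_bound[of n] by (simp only: of_nat_le_iff)
    show "0 \<le> 8 ^ n * eps ^ Suc n" using eps0 by simp
  qed
  also have "\<dots> = 100 * eps * (16 * eps) ^ n"
  proof -
    have "(16 * eps) ^ n = (2 * 8 * eps) ^ n" by simp
    also have "\<dots> = 2 ^ n * 8 ^ n * eps ^ n" by (simp only: power_mult_distrib)
    finally have e1: "(16 * eps) ^ n = 2 ^ n * 8 ^ n * eps ^ n" .
    show ?thesis unfolding e1 by (simp add: algebra_simps)
  qed
  finally show ?thesis .
qed

lemma summable_Vn: "summable (\<lambda>n. measure M (Vn n))"
proof (rule summable_comparison_test')
  have "norm (16 * eps) < 1" using eps0 small by simp
  then show "summable (\<lambda>n. 100 * eps * (16 * eps) ^ n)" by (intro summable_mult summable_geometric)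
  fix n :: nat
  show "norm (measure M (Vn n)) \<le> 100 * eps * (16 * eps) ^ n" using Vn_bound by simp
qed

lemma AE_ev: "AE \<omega> in M. eventually (\<lambda>n. \<omega> \<in> space M - Vn n) sequentially"
proof (rule borel_cantelli_AE1)
  show "\<And>n. Vn n \<in> sets M" by (rule Vn_meas)
  show "\<And>n. emeasure M (Vn n) < \<infinity>" using emeasure_finite by (simp add: less_top[symmetric])
  show "summable (\<lambda>n. measure M (Vn n))" by (rule summable_Vn)
qed

lemma good_of:
  assumes om: "\<omega> \<in> space M" and K: "\<forall>n\<ge>K. \<omega> \<notin> Vn n"
  shows "comps.Good (B \<omega>) K"
  unfolding comps.Good_def
proof (intro allI impI)
  fix n v w
  assume n: "n \<ge> K" and v: "v \<in> B \<omega>" and w: "w \<in> comps.cmp (B \<omega>) v" and nv: "nrm v \<le> 4 * int n"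
  show "dinf w v < int n"
  proof (rule ccontr)
    assume "\<not> dinf w v < int n"
    then have dw: "dinf w v \<ge> int n" by simp
    have pth: "(adj_in box_adj (B \<omega>))\<^sup>*\<^sup>* v w" using w unfolding comps.cmp_def by (simp add: comp_mem)
    from swalk[OF pth v] obtain xs where xs: "xs \<noteq> []" "hd xs = v" "last xs = w" "distinct xs" "successively box_adj xs" "set xs \<subseteq> B \<omega>"
      by blast
    have "dinf w v \<le> int (length xs) - 1" using walk_dist[OF xs(5,1)] xs(2,3) by simp
    then have len: "length xs \<ge> Suc n" using dw by linarith
    define ys where "ys = take (Suc n) xs"
    have ys1: "length ys = Suc n" unfolding ys_def using len by simp
    have ys2: "hd ys = v" unfolding ys_def using xs(2) by simp
    have ys3: "successively box_adj ys" unfolding ys_def using xs(5) by (rule succ_take)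
    have ys4: "distinct ys" unfolding ys_def using xs(4) by simp
    have "set ys \<subseteq> set xs" unfolding ys_def by (rule set_take_subset)
    then have ys5: "set ys \<subseteq> B \<omega>" using xs(6) by (rule order_trans)
    have "ys \<in> Wd v n" unfolding Wd_def using walks_char[OF ys1 ys2 ys3] ys4 by simp
    moreover have "\<omega> \<in> EW ys" unfolding EW_def using om ys5 by simp
    ultimately have "\<omega> \<in> Ev v n" unfolding Ev_def by blast
    moreover have "v \<in> {z. nrm z \<le> 4 * int n}" using nv by simp
    ultimately have "\<omega> \<in> Vn n" unfolding Vn_def by blast
    then show False using K n by blast
  qed
qed

lemma final:
  "AE \<omega> in M.
           (\<exists>!I. I \<in> components_of sq_adj (- B \<omega>) \<and> infinite I) \<and>
           (\<forall>I. I \<in> components_of sq_adj (- B \<omega>) \<and> infinite I \<longrightarrow>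
                (\<forall>C \<in> components_of box_adj (- I). finite C))"
proof (rule AE_mp[OF AE_ev], rule AE_I2, intro impI)
  fix \<omega> assume om: "\<omega> \<in> space M" and ev: "eventually (\<lambda>n. \<omega> \<in> space M - Vn n) sequentially"
  then obtain K where K: "\<forall>n\<ge>K. \<omega> \<in> space M - Vn n" unfolding eventually_sequentially by blast
  then have "\<forall>n\<ge>K. \<omega> \<notin> Vn n" by blast
  then have "comps.Good (B \<omega>) K" by (rule good_of[OF om])
  then show "(\<exists>!I. I \<in> components_of sq_adj (- B \<omega>) \<and> infinite I) \<and>
           (\<forall>I. I \<in> components_of sq_adj (- B \<omega>) \<and> infinite I \<longrightarrow>
                (\<forall>C \<in> components_of box_adj (- I). finite C))"
    by (rule comps.main_det)
qed

end

theorem lemma6p2: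
  fixes M :: "'a measure" and B :: "'a \<Rightarrow> site set" and \<epsilon> :: real
  assumes "prob_space M"
    and "\<And>z. {\<omega> \<in> space M. z \<in> B \<omega>} \<in> sets M"
    and "\<epsilon> < 1/21"
    and "rare M B \<epsilon>"
  shows "AE \<omega> in M.
           (\<exists>!I. I \<in> components_of sq_adj (- B \<omega>) \<and> infinite I) \<and>
           (\<forall>I. I \<in> components_of sq_adj (- B \<omega>) \<and> infinite I \<longrightarrow>
                (\<forall>C \<in> components_of box_adj (- I). finite C))"
proof -
  have "rsetting M B \<epsilon>"
    unfolding rsetting_def rsetting_axioms_def using assms by auto
  then show ?thesis by (rule rsetting.final)
qed


end
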